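(* Let $L\ge 1$ be an integer, $b_0>0$, $\alpha>0$, $\beta\ge 0$, $\nu>0$. Consider two distinct columns $j\neq j'$ and two (possibly equal) row indices $i,i'$ of a data matrix, modelled as follows. The column-cluster labels $C_j, C_{j'}\in\{1,2,\dots\}$ follow the BNP-MRF prior with weights $\boldsymbol{\pi}\sim\mathrm{GEM}(\alpha)$ and inverse temperature $\beta$, in the two-column case, so that $\mathbb{P}[C_j=C_{j'}]=e^{\beta}/(\alpha+e^{\beta})$. Independently of $(\boldsymbol{\pi},C_j,C_{j'})$, for every column cluster $k$ there is a vector of weights $\boldsymbol{\omega}_k$ (the $\boldsymbol{\omega}_k$ being i.i.d. across $k$), and given $\boldsymbol{\omega}_k$ the row-cluster labels $R_{1,k},R_{2,k},\dots$ are i.i.d. with $\mathbb{P}[R_{i,k}=l\mid\boldsymbol{\omega}_k]=\omega_{l,k}$. Atoms $\theta^*_1,\theta^*_2,\dots$ are i.i.d. from a diffuse distribution $H$, independent of everything else, and $\theta_{i,j}:=\theta^*_{R_{i,C_j}}$. (a) If $\boldsymbol{\omega}_k\sim\mathrm{Dirichlet}_L(b_0,\dots,b_0)$ for all $k$ (so $l\in\{1,\dots,L\}$), then $$\mathbb{P}[\theta_{i,j}=\theta_{i',j'}]=\frac{1}{\alpha+e^{\beta}}\left[e^{\beta}\left(\frac{1+b_0}{1+Lb_0}\right)^{1-\mathds{1}_{i=i'}}+\frac{\alpha}{L}\right].$$ (b) If instead $\boldsymbol{\omega}_k\sim\mathrm{GEM}(\nu)$ for all $k$ (so $l\in\{1,2,\dots\}$),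 then $$\mathbb{P}[\theta_{i,j}=\theta_{i',j'}]=\frac{1}{\alpha+e^{\beta}}\left[e^{\beta}\left(\frac{1}{1+\nu}\right)^{1-\mathds{1}_{i=i'}}+\frac{\alpha}{2\nu+1}\right].$$
   Context: $\mathrm{GEM}(a)$ denotes the stick-breaking distribution: $\pi_1=v_1$, $\pi_k=v_k\prod_{g<k}(1-v_g)$ with $v_g\overset{iid}{\sim}\mathrm{Beta}(1,a)$. The BNP-MRF prior on column labels $\boldsymbol{C}=(C_1,\dots,C_J)$ given $\boldsymbol{\pi}$ and $\beta$ has joint density proportional to $\left(\prod_{j}\pi_{C_j}\right)\exp\!\left[\beta\sum_{j}\sum_{q\in\partial_j}\mathds{1}_{\{C_q=C_j\}}\right]$, where $\partial_j$ is the set of neighbours of column (pixel) $j$; in the two-column case considered here its probability of a tie is $\mathbb{P}[C_j=C_{j'}]=e^{\beta}/(\alpha+e^{\beta})$. This is the "Pose" model: entries in column cluster $k$ and row $i$ share the row-cluster label $R_{i,k}$, and atoms $\theta^*_l$ are shared across column clusters. $\mathds{1}_{i=i'}$ equals $1$ if $i=i'$ and $0$ otherwise. *)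

theory Defs
  imports "HOL-Probability.Probability"
begin

text \<open>Measurable space of weight vectors (indexed by labels l = 1, 2, ...;
  coordinate 0 and coordinates beyond the support are unused / zero).\<close>
definition omega_space :: "(nat \<Rightarrow> real) measure" where
  "omega_space = (\<Pi>\<^sub>M l\<in>(UNIV::nat set). (borel :: real measure))"

definition gamma_density :: "real \<Rightarrow> real \<Rightarrow> real" where
  "gamma_density a x = (if 0 < x then x powr (a - 1) * exp (- x) / Gamma a else 0)"

definition beta_density :: "real \<Rightarrow> real \<Rightarrow> real \<Rightarrow> real" where
  "beta_density a b x =
     (if 0 < x \<and> x < 1 then x powr (a - 1) * (1 - x) powr (b - 1) / Beta a b else 0)"

definition dirichlet_measure :: "nat \<Rightarrow> real \<Rightarrow> (nat \<Rightarrow> real) measure" where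
  "dirichlet_measure L b0 =
     distr (\<Pi>\<^sub>M l\<in>{1..L}. density lborel (gamma_density b0)) omega_space
       (\<lambda>g l. if l \<in> {1..L} then g l / (\<Sum>m\<in>{1..L}. g m) else 0)"

definition stick_break :: "(nat \<Rightarrow> real) \<Rightarrow> nat \<Rightarrow> real" where
  "stick_break v l = (if 1 \<le> l then v l * (\<Prod>g\<in>{1..<l}. (1 - v g)) else 0)"

definition gem_measure :: "real \<Rightarrow> (nat \<Rightarrow> real) measure" where
  "gem_measure a =
     distr (\<Pi>\<^sub>M g\<in>(UNIV::nat set). density lborel (beta_density 1 a)) omega_space
       stick_break"

text \<open>The sigma-algebras of the independent blocks of the model:
  Inl () : the column labels (C j, C j');
  Inr (Inl k) : the weights omega_k together with all row labels R i k of column cluster k;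
  Inr (Inr l) : the atom theta*_l.\<close>
definition model_blocks ::
  "'a measure \<Rightarrow> (nat \<Rightarrow> 'a \<Rightarrow> nat) \<Rightarrow> nat \<Rightarrow> nat \<Rightarrow> (nat \<Rightarrow> 'a \<Rightarrow> nat \<Rightarrow> real)
    \<Rightarrow> (nat \<Rightarrow> nat \<Rightarrow> 'a \<Rightarrow> nat) \<Rightarrow> (nat \<Rightarrow> 'a \<Rightarrow> 'b::topological_space)
    \<Rightarrow> unit + nat + nat \<Rightarrow> 'a set set" where
  "model_blocks M C j j' omega R theta b =
     (case b of
        Inl _ \<Rightarrow> sigma_sets (space M)
                   ({C j -` A \<inter> space M | A. True} \<union> {C j' -` A \<inter> space M | A. True})
      | Inr (Inl k) \<Rightarrow> sigma_sets (space M)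
                   ({omega k -` A \<inter> space M | A. A \<in> sets omega_space}
                    \<union> {R i k -` A \<inter> space M | i A. True})
      | Inr (Inr l) \<Rightarrow> {theta l -` A \<inter> space M | A. A \<in> sets borel})"

end

theory Submission
  imports Defs
begin

lemma gamma_scaled:
  fixes s c :: real
  assumes s: "s > 0" and c: "c > 0"
  shows "(\<integral>\<^sup>+x. ennreal (indicator {0<..} x * x powr (s-1) * exp (-(c*x))) \<partial>lborel)
         = ennreal (Gamma s / c powr s)"
proof -
  define f where "f = (\<lambda>t::real. ennreal (indicator {0..} t * t powr (s - 1) / exp t))"
  have fm: "f \<in> borel_measurable borel" unfolding f_def by measurable
  have G: "Gamma s = integral\<^sup>N lborel f" unfolding f_def by (rule Gamma_conv_nn_integral_real[OF s])
  have "integral\<^sup>N lborel f = \<bar>c\<bar> * (\<integral>\<^sup>+x. f (0 + c * x) \<partial>lborel)"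
    using nn_integral_real_affine[OF fm, of c 0] c by simp
  also have "(\<lambda>x. f (0 + c * x)) = (\<lambda>x. ennreal (c powr (s-1)) * ennreal (indicator {0<..} x * x powr (s-1) * exp (-(c*x))))"
  proof
    fix x :: real
    show "f (0 + c * x) = ennreal (c powr (s-1)) * ennreal (indicator {0<..} x * x powr (s-1) * exp (-(c*x)))"
      using c by (cases "x > 0") (auto simp: f_def indicator_def powr_mult exp_minus field_simps
          ennreal_mult[symmetric] zero_le_mult_iff not_less)
  qed
  also have "(\<integral>\<^sup>+x. ennreal (c powr (s-1)) * ennreal (indicator {0<..} x * x powr (s-1) * exp (-(c*x))) \<partial>lborel)
      = ennreal (c powr (s-1)) * (\<integral>\<^sup>+x. ennreal (indicator {0<..} x * x powr (s-1) * exp (-(c*x))) \<partial>lborel)"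
    by (rule nn_integral_cmult) measurable
  finally have "ennreal (Gamma s) = ennreal (c * c powr (s-1)) * (\<integral>\<^sup>+x. ennreal (indicator {0<..} x * x powr (s-1) * exp (-(c*x))) \<partial>lborel)"
    using G c by (simp add: ennreal_mult mult.assoc)
  moreover have "c * c powr (s-1) = c powr s" using c by (simp add: powr_diff)
  ultimately have "ennreal (Gamma s) = ennreal (c powr s) * (\<integral>\<^sup>+x. ennreal (indicator {0<..} x * x powr (s-1) * exp (-(c*x))) \<partial>lborel)"
    by simp
  then have E: "ennreal (Gamma s) = ennreal (c powr s) * (\<integral>\<^sup>+x. ennreal (indicator {0<..} x * x powr (s-1) * exp (-(c*x))) \<partial>lborel)" .
  have k: "c powr s > 0" using c by simp
  have g: "Gamma s > 0" using s by (rule Gamma_real_pos)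
  have "ennreal (Gamma s / c powr s) = ennreal (1 / c powr s) * ennreal (Gamma s)"
    using k g by (simp add: ennreal_mult[symmetric])
  also have "\<dots> = (ennreal (1 / c powr s) * ennreal (c powr s)) * (\<integral>\<^sup>+x. ennreal (indicator {0<..} x * x powr (s-1) * exp (-(c*x))) \<partial>lborel)"
    by (subst E) (simp only: mult.assoc)
  also have "ennreal (1 / c powr s) * ennreal (c powr s) = 1"
    using k by (simp add: ennreal_mult[symmetric])
  finally show ?thesis by simp
qed


lemma ennreal_add_solve:
  assumes "ennreal a = X + ennreal b" "0 \<le> b"
  shows "X = ennreal (a - b)"
proof -
  have "X \<noteq> \<top>"
  proof
    assume "X = \<top>"
    then have "ennreal a = \<top>" using assms(1) by simp
    then show False by simp
  qed
  then obtain x where x: "X = ennreal x" "0 \<le> x" by (cases X) auto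
  then have "ennreal a = ennreal (x + b)" using assms by (simp add: ennreal_plus)
  moreover have "0 \<le> x + b" using x assms by simp
  ultimately have "a = x + b \<or> (a \<le> 0 \<and> x + b \<le> 0)" by (metis ennreal_inj ennreal_eq_0_iff linorder_le_less_linear less_imp_le)
  then show ?thesis
  proof
    assume "a = x + b" then show ?thesis using x by simp
  next
    assume h: "a \<le> 0 \<and> x + b \<le> 0"
    then have "x = 0" using x assms by linarith
    then show ?thesis using x h assms by (simp add: ennreal_neg)
  qed
qed

lemma gamma_moment:
  fixes b t :: real and n :: nat
  assumes b: "b > 0" and t: "t > -1"
  shows "(\<integral>\<^sup>+x. ennreal (gamma_density b x * x^n * exp (-(t*x))) \<partial>lborel)
         = ennreal (Gamma (b + n) / Gamma b / (1+t) powr (b + n))"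
proof -
  have gb: "Gamma b > 0" using b by (rule Gamma_real_pos)
  have "(\<lambda>x. ennreal (gamma_density b x * x^n * exp (-(t*x))))
      = (\<lambda>x. ennreal (1 / Gamma b) * ennreal (indicator {0<..} x * x powr ((b + n) - 1) * exp (-((1+t)*x))))"
  proof
    fix x :: real
    show "ennreal (gamma_density b x * x^n * exp (-(t*x)))
      = ennreal (1 / Gamma b) * ennreal (indicator {0<..} x * x powr ((b + n) - 1) * exp (-((1+t)*x)))"
    proof (cases "x > 0")
      case True
      have "x powr ((b + n) - 1) = x powr (b - 1) * x^n"
        using True by (simp add: powr_add[symmetric] powr_realpow[symmetric] algebra_simps)
      moreover have "exp (-((1+t)*x)) = exp (-x) * exp (-(t*x))"
        by (simp add: exp_add[symmetric] algebra_simps)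
      ultimately have "gamma_density b x * x^n * exp (-(t*x))
          = 1 / Gamma b * (indicator {0<..} x * x powr ((b + n) - 1) * exp (-((1+t)*x)))"
        using True by (simp add: gamma_density_def divide_inverse mult_ac)
      then have "ennreal (gamma_density b x * x^n * exp (-(t*x)))
          = ennreal (1 / Gamma b * (indicator {0<..} x * x powr ((b + n) - 1) * exp (-((1+t)*x))))"
        by (rule arg_cong)
      also have "\<dots> = ennreal (1 / Gamma b) * ennreal (indicator {0<..} x * x powr ((b + n) - 1) * exp (-((1+t)*x)))"
        by (rule ennreal_mult) (use gb True in auto)
      finally show ?thesis .
    qed (simp add: gamma_density_def)
  qed
  then have "(\<integral>\<^sup>+x. ennreal (gamma_density b x * x^n * exp (-(t*x))) \<partial>lborel)
      = ennreal (1 / Gamma b) * (\<integral>\<^sup>+x. ennreal (indicator {0<..} x * x powr ((b + n) - 1) * exp (-((1+t)*x))) \<partial>lborel)"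
    by (simp add: nn_integral_cmult)
  also have "(\<integral>\<^sup>+x. ennreal (indicator {0<..} x * x powr ((b + n) - 1) * exp (-((1+t)*x))) \<partial>lborel)
      = ennreal (Gamma (b + n) / (1+t) powr (b + n))"
    using b t by (intro gamma_scaled) auto
  also have "ennreal (1 / Gamma b) * ennreal (Gamma (b + n) / (1+t) powr (b + n))
      = ennreal (Gamma (b + n) / Gamma b / (1+t) powr (b + n))"
    using gb b t by (simp add: ennreal_mult[symmetric] Gamma_real_pos less_imp_le)
  finally show ?thesis .
qed

lemma tint:
  fixes a :: real
  assumes a: "a > 1"
  shows "(\<integral>\<^sup>+t. ennreal (indicator {0<..} t * (1+t) powr (-a)) \<partial>lborel) = ennreal (1/(a-1))"
proof -
  have raw: "((\<lambda>x. x powr (-a)) has_integral (-(1 powr (-a+1)) / (-a+1))) {1..}"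
    using a by (intro has_integral_powr_to_inf) auto
  have "((\<lambda>x. x powr (-a)) has_integral (1/(a-1))) {1..}"
    by (rule has_integral_eq_rhs[OF raw]) (use a in \<open>simp add: field_simps\<close>)
  then have I0: "(\<integral>\<^sup>+x. ennreal (x powr (-a)) * indicator {1..} x \<partial>lborel) = ennreal (1/(a-1))"
    by (rule nn_integral_has_integral_lebesgue'[rotated]) simp
  have eqf: "(\<lambda>x. ennreal (indicator {1..} x * x powr (-a))) = (\<lambda>x. ennreal (x powr (-a)) * indicator {1..} x)"
    by (auto simp: indicator_def fun_eq_iff)
  have I: "(\<integral>\<^sup>+x. ennreal (indicator {1..} x * x powr (-a)) \<partial>lborel) = ennreal (1/(a-1))"
    using I0 eqf by simp
  define f where "f = (\<lambda>x::real. ennreal (indicator {1..} x * x powr (-a)))"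
  have fm: "f \<in> borel_measurable borel" unfolding f_def by measurable
  have "integral\<^sup>N lborel f = (\<integral>\<^sup>+x. f (1 + 1 * x) \<partial>lborel)"
    using nn_integral_real_affine[OF fm, of 1 1] by simp
  also have "(\<integral>\<^sup>+x. f (1 + 1 * x) \<partial>lborel) = (\<integral>\<^sup>+t. ennreal (indicator {0<..} t * (1+t) powr (-a)) \<partial>lborel)"
  proof (rule nn_integral_cong_AE)
    show "AE x in lborel. f (1 + 1 * x) = ennreal (indicator {0<..} x * (1 + x) powr - a)"
      using AE_lborel_singleton[of 0] by eventually_elim (auto simp: f_def indicator_def)
  qed
  finally show ?thesis using I by (simp add: f_def)
qed

lemma tint2:
  fixes c :: real
  assumes c: "c > 0"
  shows "(\<integral>\<^sup>+t. ennreal (indicator {0<..} t * t * (1+t) powr (-(c+2))) \<partial>lborel) = ennreal (1/c - 1/(c+1))"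
proof -
  have "(\<lambda>t. ennreal (indicator {0<..} t * (1+t) powr (-(c+1))))
      = (\<lambda>t. ennreal (indicator {0<..} t * t * (1+t) powr (-(c+2))) + ennreal (indicator {0<..} t * (1+t) powr (-(c+2))))"
  proof
    fix t :: real
    show "ennreal (indicator {0<..} t * (1+t) powr (-(c+1)))
      = ennreal (indicator {0<..} t * t * (1+t) powr (-(c+2))) + ennreal (indicator {0<..} t * (1+t) powr (-(c+2)))"
    proof (cases "t > 0")
      case True
      have "(1+t) powr (-(c+1)) = (1+t) powr (1 + (-(c+2)))"
        by (rule arg_cong[where f="\<lambda>e. (1+t) powr e"]) simp
      also have "\<dots> = (1+t) powr 1 * (1+t) powr (-(c+2))" by (rule powr_add)
      also have "(1+t) powr 1 = 1 + t" using True by simp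
      finally have "(1+t) powr (-(c+1)) = (1+t) * (1+t) powr (-(c+2))" .
      then have "(1+t) powr (-(c+1)) = t * (1+t) powr (-(c+2)) + (1+t) powr (-(c+2))"
        by (simp add: distrib_right)
      moreover have "ennreal (t * (1+t) powr (-(c+2)) + (1+t) powr (-(c+2)))
          = ennreal (t * (1+t) powr (-(c+2))) + ennreal ((1+t) powr (-(c+2)))"
        by (rule ennreal_plus) (use True in auto)
      ultimately show ?thesis using True by simp
    qed simp
  qed
  then have "ennreal (1/c) = (\<integral>\<^sup>+t. ennreal (indicator {0<..} t * t * (1+t) powr (-(c+2))) + ennreal (indicator {0<..} t * (1+t) powr (-(c+2))) \<partial>lborel)"
    using tint[of "c+1"] c by simp
  also have "\<dots> = (\<integral>\<^sup>+t. ennreal (indicator {0<..} t * t * (1+t) powr (-(c+2))) \<partial>lborel) + (\<integral>\<^sup>+t. ennreal (indicator {0<..} t * (1+t) powr (-(c+2))) \<partial>lborel)"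
    by (rule nn_integral_add) measurable
  also have "(\<integral>\<^sup>+t. ennreal (indicator {0<..} t * (1+t) powr (-(c+2))) \<partial>lborel) = ennreal (1/(c+1))"
    using tint[of "c+2"] c by simp
  finally show ?thesis using c by (intro ennreal_add_solve) auto
qed

lemma (in prob_space) union_scaled:
  fixes A B :: "nat \<Rightarrow> 'a set"
  assumes A: "\<And>n. A n \<in> events" and B: "\<And>n. B n \<in> events" and d: "disjoint_family A"
    and eq: "\<And>n. prob (A n \<inter> B n) = c * prob (A n)"
  shows "prob (\<Union>n. A n \<inter> B n) = c * prob (\<Union>n. A n)"
proof -
  have d2: "disjoint_family (\<lambda>n. A n \<inter> B n)" using d unfolding disjoint_family_on_def by auto
  have s1: "(\<lambda>n. prob (A n \<inter> B n)) sums prob (\<Union>n. A n \<inter> B n)"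
    by (rule finite_measure_UNION) (use A B d2 in auto)
  have s2: "(\<lambda>n. prob (A n)) sums prob (\<Union>n. A n)"
    by (rule finite_measure_UNION) (use A d in auto)
  from sums_mult[OF s2, of c] s1 eq show ?thesis
    by (metis (no_types, lifting) sums_cong sums_unique2)
qed

lemma (in prob_space) theta_null:
  fixes th1 th2 :: "'a \<Rightarrow> 'b::polish_space"
  assumes m1: "th1 \<in> borel_measurable M" and m2: "th2 \<in> borel_measurable M"
    and ind: "\<And>a b. a \<in> {th1 -` A \<inter> space M | A. A \<in> sets borel} \<Longrightarrow>
                    b \<in> {th2 -` A \<inter> space M | A. A \<in> sets borel} \<Longrightarrow> prob (a \<inter> b) = prob a * prob b"
    and law1: "distr M borel th1 = H" and law2: "distr M borel th2 = H"
    and diffuse: "\<And>y. emeasure H {y} = 0"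
  shows "prob {x \<in> space M. th1 x = th2 x} = 0"
proof -
  have ev1: "{th1 -` A \<inter> space M | A. A \<in> sets borel} \<subseteq> events" using m1 by (auto simp: measurable_def)
  have ev2: "{th2 -` A \<inter> space M | A. A \<in> sets borel} \<subseteq> events" using m2 by (auto simp: measurable_def)
  have is1: "indep_set {th1 -` A \<inter> space M | A. A \<in> sets borel} {th2 -` A \<inter> space M | A. A \<in> sets borel}"
    unfolding indep_sets2_eq using ev1 ev2 ind by blast
  have st: "Int_stable {f -` A \<inter> space M | A. A \<in> sets (borel :: 'b measure)}" for f :: "'a \<Rightarrow> 'b"
    unfolding Int_stable_def
    by (auto, rule_tac x="A \<inter> Aa" in exI, auto)
  have iv: "indep_var borel th1 borel th2"
    unfolding indep_var_eq using m1 m2 indep_set_sigma_sets[OF is1 st st] by auto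
  then have D: "distr M borel th1 \<Otimes>\<^sub>M distr M borel th2 = distr M (borel \<Otimes>\<^sub>M borel) (\<lambda>x. (th1 x, th2 x))"
    unfolding indep_var_distribution_eq by blast
  have HH: "H \<Otimes>\<^sub>M H = distr M (borel \<Otimes>\<^sub>M borel) (\<lambda>x. (th1 x, th2 x))"
    using D law1 law2 by simp
  define Dg where "Dg = {p :: 'b \<times> 'b. fst p = snd p}"
  have "closed Dg" unfolding Dg_def by (intro closed_Collect_eq continuous_intros)
  then have Dgb: "Dg \<in> sets (borel \<Otimes>\<^sub>M borel)" by (subst borel_prod) simp
  have pH: "prob_space H" using law1 m1 by (metis prob_space_distr)
  then interpret H: prob_space H .
  have mp: "(\<lambda>x. (th1 x, th2 x)) \<in> measurable M (borel \<Otimes>\<^sub>M borel)" using m1 m2 by measurable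
  have "emeasure M {x \<in> space M. th1 x = th2 x} = emeasure M ((\<lambda>x. (th1 x, th2 x)) -` Dg \<inter> space M)"
    by (rule arg_cong[where f="emeasure M"]) (auto simp: Dg_def)
  also have "\<dots> = emeasure (distr M (borel \<Otimes>\<^sub>M borel) (\<lambda>x. (th1 x, th2 x))) Dg"
    using mp Dgb by (simp add: emeasure_distr)
  also have "\<dots> = emeasure (H \<Otimes>\<^sub>M H) Dg" using HH by simp
  also have "\<dots> = (\<integral>\<^sup>+x. emeasure H (Pair x -` Dg) \<partial>H)"
  proof -
    have sH: "sets H = sets borel" using law1[symmetric] by simp
    have "Dg \<in> sets (H \<Otimes>\<^sub>M H)" using Dgb sets_pair_measure_cong[OF sH sH] by simp
    then show ?thesis by (rule H.emeasure_pair_measure_alt)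
  qed
  also have "\<dots> = (\<integral>\<^sup>+x. 0 \<partial>H)"
  proof (rule nn_integral_cong)
    fix x show "emeasure H (Pair x -` Dg) = 0"
      using diffuse[of x] by (simp add: Dg_def vimage_def)
  qed
  finally show ?thesis by (simp add: measure_def)
qed

lemma ss_Int:
  assumes G: "G \<subseteq> Pow \<Omega>" and a: "a \<in> sigma_sets \<Omega> G" and b: "b \<in> sigma_sets \<Omega> G"
  shows "a \<inter> b \<in> sigma_sets \<Omega> G"
proof -
  have "a \<subseteq> \<Omega>" "b \<subseteq> \<Omega>" using sigma_sets_into_sp[OF G] a b by blast+
  then have "a \<inter> b = \<Omega> - ((\<Omega> - a) \<union> (\<Omega> - b))" by blast
  then show ?thesis by (metis sigma_sets.Compl sigma_sets_Un a b)
qed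

lemma space_omega_space: "space omega_space = UNIV"
  by (auto simp: omega_space_def space_PiM PiE_def extensional_def)

lemma part1:
  fixes M :: "'a measure"
    and C :: "nat \<Rightarrow> 'a \<Rightarrow> nat"
    and omega :: "nat \<Rightarrow> 'a \<Rightarrow> nat \<Rightarrow> real"
    and R :: "nat \<Rightarrow> nat \<Rightarrow> 'a \<Rightarrow> nat"
    and theta :: "nat \<Rightarrow> 'a \<Rightarrow> 'b::polish_space"
    and H :: "'b measure"
    and j j' i i' :: nat
    and \<mu> :: "(nat \<Rightarrow> real) measure"
  assumes M: "prob_space M"
    and jj': "j \<noteq> j'"
    and C_meas: "\<And>c. C c \<in> measurable M (count_space UNIV)"
    and omega_meas: "\<And>k. omega k \<in> measurable M omega_space"
    and R_meas: "\<And>r k. R r k \<in> measurable M (count_space UNIV)"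
    and theta_meas: "\<And>l. theta l \<in> borel_measurable M"
    and R_given_omega:
      "\<And>k I ls A. finite I \<Longrightarrow> A \<in> sets omega_space \<Longrightarrow>
         measure M {x \<in> space M. omega k x \<in> A \<and> (\<forall>r\<in>I. R r k x = ls r)}
         = integral\<^sup>L M (\<lambda>x. indicator A (omega k x) * (\<Prod>r\<in>I. omega k x (ls r)))"
    and theta_law: "\<And>l. distr M borel (theta l) = H"
    and H_diffuse: "\<And>y. emeasure H {y} = 0"
    and indep: "prob_space.indep_sets M (model_blocks M C j j' omega R theta) UNIV"
    and law: "\<And>k. distr M omega_space (omega k) = \<mu>"
  shows "\<exists>q p. (if i = i' then q = 1 else (\<lambda>l. \<integral>y. (y l)^2 \<partial>\<mu>) sums q)
           \<and> (\<lambda>l. (\<integral>y. y l \<partial>\<mu>)^2) sums p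
           \<and> measure M {x \<in> space M. theta (R i (C j x) x) x = theta (R i' (C j' x) x) x}
             = measure M {x \<in> space M. C j x = C j' x} * q
               + (1 - measure M {x \<in> space M. C j x = C j' x}) * p"
proof -
  interpret prob_space M by (rule M)
  note [measurable] = C_meas omega_meas R_meas theta_meas
  define e where "e l = (\<integral>y. y l \<partial>\<mu>)" for l
  define s where "s l = (\<integral>y. (y l)^2 \<partial>\<mu>)" for l
  define BC where "BC = model_blocks M C j j' omega R theta (Inl ())"
  define BK where "BK k = model_blocks M C j j' omega R theta (Inr (Inl k))" for k
  define GC where "GC = {C j -` A \<inter> space M | A. True} \<union> {C j' -` A \<inter> space M | A. True}"
  define GK where "GK k = {omega k -` A \<inter> space M | A. A \<in> sets omega_space}
                    \<union> {R r k -` A \<inter> space M | r A. True}" for k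
  have BC': "BC = sigma_sets (space M) GC" by (simp add: BC_def GC_def model_blocks_def)
  have BK': "BK k = sigma_sets (space M) (GK k)" for k by (simp add: BK_def GK_def model_blocks_def)
  have GCp: "GC \<subseteq> Pow (space M)" by (auto simp: GC_def)
  have GKp: "GK k \<subseteq> Pow (space M)" for k by (auto simp: GK_def)
  define AC where "AC k k' = {x \<in> space M. C j x = k \<and> C j' x = k'}" for k k'
  define Xk where "Xk k l = {x \<in> space M. R i k x = l}" for k l
  define Yk where "Yk k l = {x \<in> space M. R i' k x = l}" for k l
  define B2 where "B2 k k' = {x \<in> space M. R i k x = R i' k' x}" for k k'
  define T where "T = {x \<in> space M. C j x = C j' x}"
  define F where "F = {x \<in> space M. R i (C j x) x = R i' (C j' x) x}"
  define E where "E = {x \<in> space M. theta (R i (C j x) x) x = theta (R i' (C j' x) x) x}"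
  have memC: "AC k k' \<in> BC" for k k'
  proof -
    have "AC k k' = (C j -` {k} \<inter> space M) \<inter> (C j' -` {k'} \<inter> space M)" by (auto simp: AC_def)
    moreover have "C j -` {k} \<inter> space M \<in> BC" unfolding BC' GC_def by (rule sigma_sets.Basic) blast
    moreover have "C j' -` {k'} \<inter> space M \<in> BC" unfolding BC' GC_def by (rule sigma_sets.Basic) blast
    ultimately show ?thesis using ss_Int[OF GCp] by (simp add: BC')
  qed
  have spC: "space M \<in> BC" unfolding BC' by (rule sigma_sets_top)
  have memX: "Xk k l \<in> BK k" for k l
  proof -
    have "Xk k l = R i k -` {l} \<inter> space M" by (auto simp: Xk_def)
    then show ?thesis unfolding BK' GK_def by (simp add: sigma_sets.Basic) (rule sigma_sets.Basic, blast)
  qed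
  have memY: "Yk k l \<in> BK k" for k l
  proof -
    have "Yk k l = R i' k -` {l} \<inter> space M" by (auto simp: Yk_def)
    then show ?thesis unfolding BK' GK_def by (simp add: sigma_sets.Basic) (rule sigma_sets.Basic, blast)
  qed
  have B2_Un: "B2 k k' = (\<Union>l. Xk k l \<inter> Yk k' l)" for k k' by (auto simp: B2_def Xk_def Yk_def)
  have memB: "B2 k k \<in> BK k" for k
    unfolding B2_Un by (rule sigma_sets.Union[of _ "space M" "GK k", folded BK'])
       (use ss_Int[OF GKp] memX memY BK' in auto)
  have ind2: "prob (a \<inter> b) = prob a * prob b" if "a \<in> BC" "b \<in> BK k" for a b k
  proof -
    have "prob (\<Inter>z\<in>({Inl (), Inr (Inl k)} :: (unit + nat + nat) set). (\<lambda>z. if z = Inl () then a else b) z)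
          = (\<Prod>z\<in>({Inl (), Inr (Inl k)} :: (unit + nat + nat) set). prob ((\<lambda>z. if z = Inl () then a else b) z))"
      by (rule indep_setsD[OF indep, of "{Inl (), Inr (Inl k)}" "\<lambda>z. if z = Inl () then a else b"])
         (use that in \<open>auto simp: BC_def BK_def\<close>)
    then show ?thesis by (simp add: Int_commute)
  qed
  have ind3: "prob (a \<inter> b \<inter> c) = prob a * prob b * prob c"
    if "a \<in> BC" "b \<in> BK k" "c \<in> BK k'" "k \<noteq> k'" for a b c k k'
  proof -
    let ?A = "\<lambda>z. if z = Inl () then a else if z = Inr (Inl k) then b else c"
    have "prob (\<Inter>z\<in>({Inl (), Inr (Inl k), Inr (Inl k')} :: (unit + nat + nat) set). ?A z)
          = (\<Prod>z\<in>({Inl (), Inr (Inl k), Inr (Inl k')} :: (unit + nat + nat) set). prob (?A z))"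
      by (rule indep_setsD[OF indep, of "{Inl (), Inr (Inl k), Inr (Inl k')}" ?A])
         (use that in \<open>auto simp: BC_def BK_def\<close>)
    then show ?thesis using that(4) by (simp add: Int_ac mult_ac)
  qed
  have intl: "(\<integral>x. omega k x l \<partial>M) = e l" for k l
  proof -
    have "(\<integral>x. omega k x l \<partial>M) = (\<integral>y. y l \<partial>distr M omega_space (omega k))"
      by (rule integral_distr[symmetric]) (use omega_meas in \<open>auto simp: omega_space_def\<close>)
    then show ?thesis by (simp add: law e_def)
  qed
  have intl2: "(\<integral>x. (omega k x l)^2 \<partial>M) = s l" for k l
  proof -
    have "(\<integral>x. (omega k x l)^2 \<partial>M) = (\<integral>y. (y l)^2 \<partial>distr M omega_space (omega k))"
      by (rule integral_distr[symmetric]) (use omega_meas in \<open>auto simp: omega_space_def\<close>)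
    then show ?thesis by (simp add: law s_def)
  qed
  have UNIVo: "UNIV \<in> sets omega_space" using sets.top[of omega_space] by (simp add: space_omega_space)
  have PX: "prob (Xk k l) = e l" for k l
  proof -
    have "measure M {x \<in> space M. omega k x \<in> UNIV \<and> (\<forall>r\<in>{i}. R r k x = (\<lambda>_. l) r)}
       = (\<integral>x. indicator UNIV (omega k x) * (\<Prod>r\<in>{i}. omega k x ((\<lambda>_. l) r)) \<partial>M)"
      by (rule R_given_omega) (auto simp: UNIVo)
    then show ?thesis by (simp add: Xk_def intl)
  qed
  have PY: "prob (Yk k l) = e l" for k l
  proof -
    have "measure M {x \<in> space M. omega k x \<in> UNIV \<and> (\<forall>r\<in>{i'}. R r k x = (\<lambda>_. l) r)}
       = (\<integral>x. indicator UNIV (omega k x) * (\<Prod>r\<in>{i'}. omega k x ((\<lambda>_. l) r)) \<partial>M)"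
      by (rule R_given_omega) (auto simp: UNIVo)
    then show ?thesis by (simp add: Yk_def intl)
  qed
  have PXY: "prob (Xk k l \<inter> Yk k l) = s l" if "i \<noteq> i'" for k l
  proof -
    have "measure M {x \<in> space M. omega k x \<in> UNIV \<and> (\<forall>r\<in>{i,i'}. R r k x = (\<lambda>_. l) r)}
       = (\<integral>x. indicator UNIV (omega k x) * (\<Prod>r\<in>{i,i'}. omega k x ((\<lambda>_. l) r)) \<partial>M)"
      by (rule R_given_omega) (auto simp: UNIVo)
    moreover have "Xk k l \<inter> Yk k l = {x \<in> space M. omega k x \<in> UNIV \<and> (\<forall>r\<in>{i,i'}. R r k x = (\<lambda>_. l) r)}"
      by (auto simp: Xk_def Yk_def)
    ultimately show ?thesis using that intl2[of k l] by (simp add: power2_eq_square)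
  qed
  have evX: "Xk k l \<in> events" "Yk k l \<in> events" for k l by (auto simp: Xk_def Yk_def)
  have evAC: "AC k k' \<in> events" for k k' by (auto simp: AC_def)
  have evB2: "B2 k k' \<in> events" for k k' unfolding B2_Un using evX by auto
  have evT: "T \<in> events"
  proof -
    have "T = (\<Union>k. AC k k)" by (auto simp: T_def AC_def)
    then show ?thesis using evAC by auto
  qed

  have fR1: "(\<lambda>x. R i (C j x) x) \<in> measurable M (count_space UNIV)"
    by (rule measurable_compose_countable'[where f="\<lambda>k x. R i k x" and I=UNIV]) auto
  have fR2: "(\<lambda>x. R i' (C j' x) x) \<in> measurable M (count_space UNIV)"
    by (rule measurable_compose_countable'[where f="\<lambda>k x. R i' k x" and I=UNIV]) auto
  have fT1: "(\<lambda>x. theta (R i (C j x) x) x) \<in> borel_measurable M"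
    by (rule measurable_compose_countable'[where f="\<lambda>l x. theta l x" and I=UNIV, OF _ fR1]) auto
  have fT2: "(\<lambda>x. theta (R i' (C j' x) x) x) \<in> borel_measurable M"
    by (rule measurable_compose_countable'[where f="\<lambda>l x. theta l x" and I=UNIV, OF _ fR2]) auto
  have evE: "E \<in> events" unfolding E_def using fT1 fT2 by (rule measurable_equality_set)
  have F_Un: "F = (\<Union>l. {x \<in> space M. R i (C j x) x = l} \<inter> {x \<in> space M. R i' (C j' x) x = l})"
    by (auto simp: F_def)
  have evF: "F \<in> events"
  proof -
    have "{x \<in> space M. R i (C j x) x = l} = (\<lambda>x. R i (C j x) x) -` {l} \<inter> space M" for l by auto
    moreover have "{x \<in> space M. R i' (C j' x) x = l} = (\<lambda>x. R i' (C j' x) x) -` {l} \<inter> space M" for l by auto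
    ultimately show ?thesis unfolding F_Un using measurable_sets[OF fR1] measurable_sets[OF fR2] by auto
  qed
  have null: "prob {x \<in> space M. theta l x = theta m x} = 0" if "l \<noteq> m" for l m
  proof (rule theta_null[OF theta_meas theta_meas _ theta_law theta_law H_diffuse])
    fix a b assume a: "a \<in> {theta l -` A \<inter> space M | A. A \<in> sets borel}"
      and b: "b \<in> {theta m -` A \<inter> space M | A. A \<in> sets borel}"
    let ?A = "\<lambda>z. if z = Inr (Inr l) then a else b"
    have "prob (\<Inter>z\<in>({Inr (Inr l), Inr (Inr m)} :: (unit + nat + nat) set). ?A z)
          = (\<Prod>z\<in>({Inr (Inr l), Inr (Inr m)} :: (unit + nat + nat) set). prob (?A z))"
      by (rule indep_setsD[OF indep, of "{Inr (Inr l), Inr (Inr m)}" ?A])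
         (use a b that in \<open>auto simp: model_blocks_def\<close>)
    then show "prob (a \<inter> b) = prob a * prob b" using that by (simp add: Int_commute)
  qed
  have AEth: "AE x in M. \<forall>l m. l \<noteq> m \<longrightarrow> theta l x \<noteq> theta m x"
  proof -
    have "AE x in M. theta l x \<noteq> theta m x" if "l \<noteq> m" for l m
    proof -
      have ev: "{x \<in> space M. theta l x = theta m x} \<in> events" by measurable
      have "emeasure M {x \<in> space M. theta l x = theta m x} = 0"
        using null[OF that] ev by (simp add: emeasure_eq_measure)
      then show ?thesis using ev by (subst AE_iff_measurable[OF ev]) auto
    qed
    then show ?thesis by (auto simp: AE_all_countable)
  qed
  have EF: "prob E = prob F"
  proof (rule measure_eq_AE[OF _ evE evF])
    show "AE x in M. (x \<in> E) = (x \<in> F)"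
      using AEth by eventually_elim (auto simp: E_def F_def)
  qed
  define q where "q = (if i = i' then 1 else prob (B2 0 0))"
  have Pq: "prob (B2 k k) = q" for k
  proof (cases "i = i'")
    case True
    then have "B2 k k = space M" by (auto simp: B2_def)
    then show ?thesis using True by (simp add: q_def prob_space)
  next
    case False
    have "(\<lambda>l. prob (Xk k l \<inter> Yk k l)) sums prob (\<Union>l. Xk k l \<inter> Yk k l)" for k
      by (rule finite_measure_UNION) (auto simp: evX disjoint_family_on_def Xk_def)
    then have "s sums prob (B2 k k)" for k using PXY[OF False] by (simp add: B2_Un)
    then show ?thesis using False by (simp add: q_def) (metis sums_unique2)
  qed
  have qs: "i \<noteq> i' \<Longrightarrow> s sums q"
  proof -
    assume ne: "i \<noteq> i'"
    have "(\<lambda>l. prob (Xk 0 l \<inter> Yk 0 l)) sums prob (\<Union>l. Xk 0 l \<inter> Yk 0 l)"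
      by (rule finite_measure_UNION) (auto simp: evX disjoint_family_on_def Xk_def)
    then show ?thesis using PXY[OF ne] Pq[of 0] by (simp add: B2_Un)
  qed
  define p where "p = prob (B2 0 1)"
  have ps0: "(\<lambda>l. prob (AC k k' \<inter> (Xk k l \<inter> Yk k' l))) sums prob (AC k k' \<inter> B2 k k')" for k k'
  proof -
    have "(\<lambda>l. prob (AC k k' \<inter> (Xk k l \<inter> Yk k' l))) sums prob (\<Union>l. AC k k' \<inter> (Xk k l \<inter> Yk k' l))"
    proof (rule finite_measure_UNION)
      show "range (\<lambda>l. AC k k' \<inter> (Xk k l \<inter> Yk k' l)) \<subseteq> events" using evX evAC by auto
      show "disjoint_family (\<lambda>l. AC k k' \<inter> (Xk k l \<inter> Yk k' l))"
        by (auto simp: disjoint_family_on_def Xk_def)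
    qed
    moreover have "(\<Union>l. AC k k' \<inter> (Xk k l \<inter> Yk k' l)) = AC k k' \<inter> B2 k k'"
      by (auto simp: B2_Un)
    ultimately show ?thesis by simp
  qed
  have P3: "prob (AC k k' \<inter> (Xk k l \<inter> Yk k' l)) = prob (AC k k') * (e l)^2" if "k \<noteq> k'" for k k' l
    using ind3[OF memC memX memY that] PX PY by (simp add: Int_assoc power2_eq_square)
  have ACsp: "AC 0 1 \<union> (space M - AC 0 1) = space M" by (auto simp: AC_def)
  have ps: "(\<lambda>l. (e l)^2) sums p"
  proof -
    have "(\<lambda>l. prob (space M \<inter> (Xk 0 l \<inter> Yk 1 l))) sums prob (\<Union>l. space M \<inter> (Xk 0 l \<inter> Yk 1 l))"
    proof (rule finite_measure_UNION)
      show "range (\<lambda>l. space M \<inter> (Xk 0 l \<inter> Yk 1 l)) \<subseteq> events" using evX by auto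
      show "disjoint_family (\<lambda>l. space M \<inter> (Xk 0 l \<inter> Yk 1 l))"
        by (auto simp: disjoint_family_on_def Xk_def)
    qed
    moreover have "prob (space M \<inter> (Xk 0 l \<inter> Yk 1 l)) = (e l)^2" for l
      using ind3[OF spC memX[of 0 l] memY[of 1 l]] PX PY by (simp add: Int_assoc power2_eq_square prob_space)
    moreover have "(\<Union>l. space M \<inter> (Xk 0 l \<inter> Yk 1 l)) = B2 0 1" by (auto simp: B2_Un Xk_def)
    ultimately show ?thesis by (simp add: p_def)
  qed
  have PACB: "prob (AC k k' \<inter> B2 k k') = p * prob (AC k k')" if "k \<noteq> k'" for k k'
  proof -
    have "(\<lambda>l. prob (AC k k') * (e l)^2) sums (prob (AC k k') * p)" by (rule sums_mult[OF ps])
    then have "(\<lambda>l. prob (AC k k' \<inter> (Xk k l \<inter> Yk k' l))) sums (prob (AC k k') * p)"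
      using P3[OF that] by simp
    then show ?thesis using ps0[of k k'] by (metis sums_unique2 mult.commute)
  qed
  have FT: "F \<inter> T = (\<Union>k. AC k k \<inter> B2 k k)" by (auto simp: F_def T_def AC_def B2_def)
  have TU: "T = (\<Union>k. AC k k)" by (auto simp: T_def AC_def)
  have stepB0: "prob (\<Union>k. AC k k \<inter> B2 k k) = q * prob (\<Union>k. AC k k)"
  proof (rule union_scaled)
    show "disjoint_family (\<lambda>k. AC k k)" by (auto simp: disjoint_family_on_def AC_def)
    show "prob (AC k k \<inter> B2 k k) = q * prob (AC k k)" for k
      using ind2[OF memC memB, of k k k] Pq[of k] by simp
  qed (auto simp: evAC evB2)
  have stepB: "prob (F \<inter> T) = q * prob T"
  proof -
    have "prob (F \<inter> T) = prob (\<Union>k. AC k k \<inter> B2 k k)" using FT by simp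
    moreover have "prob T = prob (\<Union>k. AC k k)" using TU by simp
    ultimately show ?thesis using stepB0 by simp
  qed
  define ACn where "ACn k k' = (if k = k' then {} else AC k k')" for k k'
  define G where "G k = {x \<in> space M. C j x = k \<and> C j' x \<noteq> k}" for k
  define HH where "HH k = (\<Union>k'. ACn k k' \<inter> B2 k k')" for k
  have GU: "G k = (\<Union>k'. ACn k k')" for k by (auto simp: G_def ACn_def AC_def)
  have evACn: "ACn k k' \<in> events" for k k' by (simp add: ACn_def evAC)
  have evG: "G k \<in> events" for k unfolding GU using evACn by auto
  have evHH: "HH k \<in> events" for k unfolding HH_def using evACn evB2 by auto
  have PHH: "prob (HH k) = p * prob (G k)" for k
    unfolding HH_def GU
  proof (rule union_scaled)
    show "disjoint_family (ACn k)" by (auto simp: disjoint_family_on_def ACn_def AC_def)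
    show "prob (ACn k k' \<inter> B2 k k') = p * prob (ACn k k')" for k'
      by (cases "k = k'") (simp_all add: ACn_def PACB)
  qed (auto simp: evACn evB2)
  have HHG: "HH k \<subseteq> G k" for k unfolding HH_def GU by auto
  have FmT: "F - T = (\<Union>k. G k \<inter> HH k)"
  proof -
    have "F - T = (\<Union>k. HH k)"
    proof (intro equalityI subsetI)
      fix x assume "x \<in> F - T"
      then have "x \<in> space M" "R i (C j x) x = R i' (C j' x) x" "C j x \<noteq> C j' x" by (auto simp: F_def T_def)
      then have "x \<in> ACn (C j x) (C j' x) \<inter> B2 (C j x) (C j' x)" by (auto simp: ACn_def AC_def B2_def)
      then show "x \<in> (\<Union>k. HH k)" unfolding HH_def by blast
    next
      fix x assume "x \<in> (\<Union>k. HH k)"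
      then show "x \<in> F - T" by (auto simp: HH_def ACn_def AC_def B2_def F_def T_def split: if_splits)
    qed
    then show ?thesis using HHG by auto
  qed
  have GT: "(\<Union>k. G k) = space M - T" by (auto simp: G_def T_def)
  have stepC: "prob (F - T) = p * (1 - prob T)"
  proof -
    have "prob (\<Union>k. G k \<inter> HH k) = p * prob (\<Union>k. G k)"
    proof (rule union_scaled)
      show "disjoint_family G" by (auto simp: disjoint_family_on_def G_def)
      show "prob (G k \<inter> HH k) = p * prob (G k)" for k
        using HHG[of k] PHH[of k] by (simp add: Int_absorb1)
    qed (auto simp: evG evHH)
    then show ?thesis unfolding FmT GT using prob_compl[OF evT] by simp
  qed
  have "prob F = prob (F \<inter> T) + prob (F - T)"
  proof -
    have "F = (F \<inter> T) \<union> (F - T)" by blast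
    then have "prob F = prob ((F \<inter> T) \<union> (F - T))" by simp
    also have "\<dots> = prob (F \<inter> T) + prob (F - T)"
      by (rule finite_measure_Union) (use evF evT in auto)
    finally show ?thesis .
  qed
  then have final: "prob E = prob T * q + (1 - prob T) * p"
    using EF stepB stepC by (simp add: mult.commute)
  show ?thesis
  proof (intro exI conjI)
    show "if i = i' then q = 1 else (\<lambda>l. \<integral>y. (y l)^2 \<partial>\<mu>) sums q"
      using qs by (auto simp: q_def s_def[abs_def])
    show "(\<lambda>l. (\<integral>y. y l \<partial>\<mu>)^2) sums p" using ps by (simp add: e_def[abs_def])
    show "prob {x \<in> space M. theta (R i (C j x) x) x = theta (R i' (C j' x) x) x}
      = prob {x \<in> space M. C j x = C j' x} * q + (1 - prob {x \<in> space M. C j x = C j' x}) * p"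
      using final by (simp add: E_def T_def)
  qed
qed

lemma gd_meas[measurable]: "gamma_density b \<in> borel_measurable borel"
  unfolding gamma_density_def by measurable

lemma dir_unfold: "dirichlet_measure L b0 =
     distr (\<Pi>\<^sub>M l\<in>{1..L}. density lborel (\<lambda>x. ennreal (gamma_density b0 x))) omega_space
       (\<lambda>g l. if l \<in> {1..L} then g l / (\<Sum>m\<in>{1..L}. g m) else 0)"
  by (simp add: dirichlet_measure_def)

lemma G_factor:
  fixes b t :: real and k :: nat
  assumes b: "b > 0" and t: "t > -1"
  shows "(\<integral>\<^sup>+x. ennreal (x^k * exp (-(t*x))) \<partial>density lborel (\<lambda>x. ennreal (gamma_density b x)))
       = ennreal (Gamma (b + k) / Gamma b / (1+t) powr (b + k))"
proof -
  have "(\<integral>\<^sup>+x. ennreal (x^k * exp (-(t*x))) \<partial>density lborel (\<lambda>x. ennreal (gamma_density b x)))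
      = (\<integral>\<^sup>+x. ennreal (gamma_density b x) * ennreal (x^k * exp (-(t*x))) \<partial>lborel)"
    by (rule nn_integral_density) measurable
  also have "\<dots> = (\<integral>\<^sup>+x. ennreal (gamma_density b x * x^k * exp (-(t*x))) \<partial>lborel)"
  proof (rule nn_integral_cong)
    fix x :: real
    show "ennreal (gamma_density b x) * ennreal (x^k * exp (-(t*x))) = ennreal (gamma_density b x * x^k * exp (-(t*x)))"
    proof (cases "x > 0")
      case True
      have "0 \<le> gamma_density b x" using True b by (simp add: gamma_density_def)
      then show ?thesis using True by (simp add: ennreal_mult mult.assoc)
    qed (simp add: gamma_density_def)
  qed
  also have "\<dots> = ennreal (Gamma (b + k) / Gamma b / (1+t) powr (b + k))"
    by (rule gamma_moment[OF b t])
  finally show ?thesis .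
qed

lemma probG: "b > 0 \<Longrightarrow> prob_space (density lborel (\<lambda>x. ennreal (gamma_density b x)))"
proof (rule prob_spaceI)
  assume b: "b > 0"
  have "emeasure (density lborel (\<lambda>x. ennreal (gamma_density b x))) (space (density lborel (\<lambda>x. ennreal (gamma_density b x))))
     = (\<integral>\<^sup>+x. ennreal (x^0 * exp (-(0*x))) \<partial>density lborel (\<lambda>x. ennreal (gamma_density b x)))"
    by (simp add: emeasure_density nn_integral_density)
  also have "\<dots> = 1" using G_factor[OF b, of 0 0] b Gamma_real_pos[OF b] by simp
  finally show "emeasure (density lborel (\<lambda>x. ennreal (gamma_density b x))) (space (density lborel (\<lambda>x. ennreal (gamma_density b x)))) = 1" .
qed

lemma AE_G_pos: "AE x in density lborel (\<lambda>x. ennreal (gamma_density b x)). 0 < x"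
  by (subst AE_density) (auto simp: gamma_density_def intro!: AE_I2 split: if_splits)


lemma dir_nn:
  fixes L l n :: nat and b :: real
  assumes L: "1 \<le> L" and b: "0 < b" and l: "l \<in> {1..L}" and n: "n = 1 \<or> n = 2"
  shows "(\<integral>\<^sup>+g. ennreal ((g l / (\<Sum>m\<in>{1..L}. g m))^n) \<partial>(\<Pi>\<^sub>M m\<in>{1..L}. density lborel (\<lambda>x. ennreal (gamma_density b x))))
       = ennreal (Gamma (b+n) / Gamma b) *
         (\<integral>\<^sup>+t. ennreal (indicator {0<..} t * t^(n-1) * (1+t) powr (-(L*b+n))) \<partial>lborel)"
proof -
  define G where "G = density lborel (\<lambda>x. ennreal (gamma_density b x))"
  define PG where "PG = (\<Pi>\<^sub>M m\<in>{1..L}. G)"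
  have pG: "prob_space G" unfolding G_def by (rule probG[OF b])
  have sG[measurable_cong]: "sets G = sets borel" by (simp add: G_def)
  interpret PS: product_sigma_finite "\<lambda>_::nat. G"
    unfolding product_sigma_finite_def using prob_space_imp_sigma_finite[OF pG] by simp
  have pPG: "prob_space PG" unfolding PG_def by (rule prob_space_PiM) (use pG in auto)
  interpret PGs: prob_space PG by (rule pPG)
  interpret PF: pair_sigma_finite PG lborel
    unfolding pair_sigma_finite_def
    using PGs.sigma_finite_measure_axioms sigma_finite_lborel by simp
  have gbne: "Gamma b \<noteq> 0" using Gamma_real_pos[OF b] by simp
  define kk where "kk m = (if m = l then n else 0)" for m :: nat
  define K where "K g t = ennreal (indicator {0<..} t * t^(n-1)) *
      (\<Prod>m\<in>{1..L}. ennreal (g m ^ kk m * exp (-(t * g m))))" for g :: "nat \<Rightarrow> real" and t :: real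
  have Km: "(\<lambda>(g,t). K g t) \<in> borel_measurable (PG \<Otimes>\<^sub>M lborel)"
    unfolding K_def PG_def by measurable
  have AEpos: "AE g in PG. \<forall>m\<in>{1..L}. 0 < g m"
    unfolding PG_def
  proof (rule eventually_ball_finite)
    have "AE x in G. 0 < x" unfolding G_def by (rule AE_G_pos)
    then show "\<forall>m\<in>{1..L}. AE g in \<Pi>\<^sub>M m\<in>{1..L}. G. 0 < g m"
      by (auto intro!: AE_PiM_component pG)
  qed simp
  have n1: "1 \<le> n" using n by auto
  have Gn: "Gamma (real n) = 1" using n by (auto simp: Gamma_fact[of 1, simplified])
  have pt: "ennreal ((g l / (\<Sum>m\<in>{1..L}. g m))^n) = (\<integral>\<^sup>+t. K g t \<partial>lborel)" if pos: "\<forall>m\<in>{1..L}. 0 < g m" for g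
  proof -
    define S where "S = (\<Sum>m\<in>{1..L}. g m)"
    have S: "S > 0" unfolding S_def using pos L by (intro sum_pos) auto
    have gl: "g l > 0" using pos l by auto
    have gm0: "\<And>m. m \<in> {1..L} \<Longrightarrow> 0 \<le> g m" using pos by (auto simp: less_imp_le)
    have prodeq: "(\<Prod>m\<in>{1..L}. ennreal (g m ^ kk m * exp (-(t * g m)))) = ennreal ((g l)^n * exp (-(S*t)))" for t
    proof -
      have "(\<Prod>m\<in>{1..L}. ennreal (g m ^ kk m * exp (-(t * g m)))) = ennreal (\<Prod>m\<in>{1..L}. g m ^ kk m * exp (-(t * g m)))"
        by (rule prod_ennreal) (use gm0 in simp)
      also have "(\<Prod>m\<in>{1..L}. g m ^ kk m * exp (-(t * g m))) = (\<Prod>m\<in>{1..L}. g m ^ kk m) * (\<Prod>m\<in>{1..L}. exp (-(t * g m)))"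
        by (rule prod.distrib)
      also have "(\<Prod>m\<in>{1..L}. g m ^ kk m) = (\<Prod>m\<in>{1..L}. if m = l then g m ^ n else 1)"
        by (rule prod.cong) (auto simp: kk_def)
      also have "\<dots> = g l ^ n" using l by simp
      also have "(\<Prod>m\<in>{1..L}. exp (-(t * g m))) = exp (\<Sum>m\<in>{1..L}. -(t * g m))"
        by (simp add: exp_sum)
      also have "(\<Sum>m\<in>{1..L}. -(t * g m)) = -(S*t)"
        by (simp add: S_def sum_negf sum_distrib_left mult.commute)
      finally show ?thesis .
    qed
    have Keq: "K g t = ennreal ((g l)^n) * ennreal (indicator {0<..} t * t powr (real n - 1) * exp (-(S*t)))" for t
    proof (cases "t > 0")
      case True
      have "t powr (real n - 1) = t^(n-1)" using True n1 by (simp add: powr_realpow[symmetric] of_nat_diff)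
      then show ?thesis using True gl unfolding K_def prodeq
        by (simp add: ennreal_mult[symmetric] mult_ac)
    qed (simp add: K_def)
    have "(\<integral>\<^sup>+t. K g t \<partial>lborel) = ennreal ((g l)^n) * (\<integral>\<^sup>+t. ennreal (indicator {0<..} t * t powr (real n - 1) * exp (-(S*t))) \<partial>lborel)"
      unfolding Keq by (rule nn_integral_cmult) measurable
    also have "(\<integral>\<^sup>+t. ennreal (indicator {0<..} t * t powr (real n - 1) * exp (-(S*t))) \<partial>lborel) = ennreal (Gamma n / S powr n)"
      using gamma_scaled[of "real n" S] n1 S by simp
    also have "ennreal ((g l)^n) * ennreal (Gamma n / S powr n) = ennreal ((g l / S)^n)"
      using S gl Gn by (simp add: ennreal_mult[symmetric] powr_realpow power_divide)
    finally show ?thesis by (simp add: S_def)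
  qed
  have inner: "(\<integral>\<^sup>+g. K g t \<partial>PG) = ennreal (indicator {0<..} t * t^(n-1)) *
       ennreal (Gamma (b+n) / Gamma b * (1+t) powr (-(L*b+n)))" for t
  proof -
    have "(\<integral>\<^sup>+g. K g t \<partial>PG) = ennreal (indicator {0<..} t * t^(n-1)) *
        (\<integral>\<^sup>+g. (\<Prod>m\<in>{1..L}. ennreal (g m ^ kk m * exp (-(t * g m)))) \<partial>PG)"
      unfolding K_def PG_def by (rule nn_integral_cmult) measurable
    also have "(\<integral>\<^sup>+g. (\<Prod>m\<in>{1..L}. ennreal (g m ^ kk m * exp (-(t * g m)))) \<partial>PG)
        = (\<Prod>m\<in>{1..L}. (\<integral>\<^sup>+x. ennreal (x ^ kk m * exp (-(t * x))) \<partial>G))"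
      unfolding PG_def by (rule PS.product_nn_integral_prod) auto
    finally have A: "(\<integral>\<^sup>+g. K g t \<partial>PG) = ennreal (indicator {0<..} t * t^(n-1)) *
        (\<Prod>m\<in>{1..L}. (\<integral>\<^sup>+x. ennreal (x ^ kk m * exp (-(t * x))) \<partial>G))" .
    show ?thesis
    proof (cases "t > 0")
      case False
      then show ?thesis using A by simp
    next
      case True
      have "(\<Prod>m\<in>{1..L}. (\<integral>\<^sup>+x. ennreal (x ^ kk m * exp (-(t * x))) \<partial>G))
          = (\<Prod>m\<in>{1..L}. ennreal (Gamma (b + kk m) / Gamma b / (1+t) powr (b + kk m)))"
        by (rule prod.cong) (use True b in \<open>simp_all add: G_def G_factor\<close>)
      also have "\<dots> = ennreal (\<Prod>m\<in>{1..L}. Gamma (b + kk m) / Gamma b / (1+t) powr (b + kk m))"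
        by (rule prod_ennreal) (use b True in auto)
      also have "(\<Prod>m\<in>{1..L}. Gamma (b + kk m) / Gamma b / (1+t) powr (b + kk m))
          = (\<Prod>m\<in>{1..L}. Gamma (b + kk m) / Gamma b) / (\<Prod>m\<in>{1..L}. (1+t) powr (b + kk m))"
        by (rule prod_dividef)
      also have "(\<Prod>m\<in>{1..L}. Gamma (b + kk m) / Gamma b) = (\<Prod>m\<in>{1..L}. if m = l then Gamma (b + n) / Gamma b else 1)"
        by (rule prod.cong) (use b in \<open>auto simp: kk_def gbne\<close>)
      also have "\<dots> = Gamma (b + n) / Gamma b" using l by simp
      also have "(\<Prod>m\<in>{1..L}. (1+t) powr (b + kk m)) = (1+t) powr (\<Sum>m\<in>{1..L}. (b + kk m))"
        using True by (simp add: powr_sum)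
      also have "(\<Sum>m\<in>{1..L}. (b + real (kk m))) = L*b + n"
      proof -
        have "(\<Sum>m\<in>{1..L}. (b + real (kk m))) = (\<Sum>m\<in>{1..L}. b) + (\<Sum>m\<in>{1..L}. real (kk m))"
          by (rule sum.distrib)
        also have "(\<Sum>m\<in>{1..L}. real (kk m)) = (\<Sum>m\<in>{1..L}. if m = l then real n else 0)"
          by (rule sum.cong) (auto simp: kk_def)
        also have "\<dots> = n" using l by simp
        finally show ?thesis by simp
      qed
      finally have B: "(\<Prod>m\<in>{1..L}. (\<integral>\<^sup>+x. ennreal (x ^ kk m * exp (-(t * x))) \<partial>G))
          = ennreal (Gamma (b + n) / Gamma b / (1+t) powr (L*b + n))" .
      have C: "Gamma (b + n) / Gamma b / (1+t) powr (L*b + n) = Gamma (b+n) / Gamma b * (1+t) powr (-(L*b+n))"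
        by (simp only: powr_minus_divide) simp
      show ?thesis using A B C by (simp only:)
    qed
  qed
  have "(\<integral>\<^sup>+g. ennreal ((g l / (\<Sum>m\<in>{1..L}. g m))^n) \<partial>PG) = (\<integral>\<^sup>+g. (\<integral>\<^sup>+t. K g t \<partial>lborel) \<partial>PG)"
    by (rule nn_integral_cong_AE) (use AEpos pt in \<open>auto elim!: eventually_mono\<close>)
  also have "\<dots> = (\<integral>\<^sup>+t. (\<integral>\<^sup>+g. K g t \<partial>PG) \<partial>lborel)"
    by (rule PF.Fubini'[symmetric]) (use Km in simp)
  also have "\<dots> = (\<integral>\<^sup>+t. ennreal (Gamma (b+n) / Gamma b) * ennreal (indicator {0<..} t * t^(n-1) * (1+t) powr (-(L*b+n))) \<partial>lborel)"
  proof (rule nn_integral_cong)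
    fix t :: real
    show "(\<integral>\<^sup>+g. K g t \<partial>PG) = ennreal (Gamma (b+n) / Gamma b) * ennreal (indicator {0<..} t * t^(n-1) * (1+t) powr (-(L*b+n)))"
      unfolding inner using b by (cases "t > 0") (simp_all add: ennreal_mult[symmetric] mult_ac)
  qed
  also have "\<dots> = ennreal (Gamma (b+n) / Gamma b) * (\<integral>\<^sup>+t. ennreal (indicator {0<..} t * t^(n-1) * (1+t) powr (-(L*b+n))) \<partial>lborel)"
    by (rule nn_integral_cmult) measurable
  finally show ?thesis by (simp add: PG_def G_def)
qed


lemma AE_PG_pos:
  fixes L :: nat and b :: real
  assumes b: "0 < b"
  shows "AE g in (\<Pi>\<^sub>M m\<in>{1..L}. density lborel (\<lambda>x. ennreal (gamma_density b x))). \<forall>m\<in>{1..L}. 0 < g m"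
proof (rule eventually_ball_finite)
  have "AE x in density lborel (\<lambda>x. ennreal (gamma_density b x)). 0 < x" by (rule AE_G_pos)
  then show "\<forall>m\<in>{1..L}. AE g in (\<Pi>\<^sub>M m\<in>{1..L}. density lborel (\<lambda>x. ennreal (gamma_density b x))). 0 < g m"
    by (auto intro!: AE_PiM_component probG b)
qed simp

lemma dir_moment_gen:
  fixes L l n :: nat and b :: real
  assumes L: "1 \<le> L" and b: "0 < b" and n: "n = 1 \<or> n = 2"
  shows "(\<integral>y. (y l)^n \<partial>dirichlet_measure L b) =
     (if l \<in> {1..L} then enn2real (ennreal (Gamma (b+n) / Gamma b) *
         (\<integral>\<^sup>+t. ennreal (indicator {0<..} t * t^(n-1) * (1+t) powr (-(L*b+n))) \<partial>lborel)) else 0)"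
proof -
  define G where "G = density lborel (\<lambda>x. ennreal (gamma_density b x))"
  define PG where "PG = (\<Pi>\<^sub>M m\<in>{1..L}. G)"
  have sG[measurable_cong]: "sets G = sets borel" by (simp add: G_def)
  define nrm where "nrm = (\<lambda>(g::nat \<Rightarrow> real) l. if l \<in> {1..L} then g l / (\<Sum>m\<in>{1..L}. g m) else 0)"
  have nm: "nrm \<in> measurable PG omega_space"
    unfolding omega_space_def nrm_def PG_def
  proof (rule measurable_PiM_single')
    fix i :: nat
    show "(\<lambda>g. if i \<in> {1..L} then g i / (\<Sum>m\<in>{1..L}. g m) else 0) \<in> borel_measurable (\<Pi>\<^sub>M m\<in>{1..L}. G)"
    proof (cases "i \<in> {1..L}")
      case True
      then show ?thesis by simp measurable
    next
      case False
      then have "(\<lambda>g::nat\<Rightarrow>real. if i \<in> {1..L} then g i / (\<Sum>m\<in>{1..L}. g m) else 0) = (\<lambda>g. 0)" by auto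
      then show ?thesis by simp
    qed
  qed (auto simp: space_PiM)
  have "(\<integral>y. (y l)^n \<partial>dirichlet_measure L b) = (\<integral>g. (nrm g l)^n \<partial>PG)"
    unfolding dir_unfold nrm_def[symmetric] G_def[symmetric] PG_def[symmetric]
    by (rule integral_distr[OF nm]) (simp add: omega_space_def)
  also have "\<dots> = (if l \<in> {1..L} then enn2real (ennreal (Gamma (b+n) / Gamma b) *
         (\<integral>\<^sup>+t. ennreal (indicator {0<..} t * t^(n-1) * (1+t) powr (-(L*b+n))) \<partial>lborel)) else 0)"
  proof (cases "l \<in> {1..L}")
    case False
    then show ?thesis using n by (auto simp: nrm_def)
  next
    case True
    have "(\<integral>g. (nrm g l)^n \<partial>PG) = (\<integral>g. (g l / (\<Sum>m\<in>{1..L}. g m))^n \<partial>PG)"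
      using True by (simp add: nrm_def)
    also have "\<dots> = enn2real (\<integral>\<^sup>+g. ennreal ((g l / (\<Sum>m\<in>{1..L}. g m))^n) \<partial>PG)"
    proof (rule integral_eq_nn_integral)
      show "(\<lambda>g. (g l / (\<Sum>m\<in>{1..L}. g m))^n) \<in> borel_measurable PG"
        unfolding PG_def using True by measurable
      show "AE g in PG. 0 \<le> (g l / (\<Sum>m\<in>{1..L}. g m))^n"
        using AE_PG_pos[OF b, of L] unfolding PG_def G_def
      proof eventually_elim
        case (elim g)
        then have gm: "\<And>m. m \<in> {1..L} \<Longrightarrow> 0 \<le> g m" by (meson less_imp_le)
        then have "0 \<le> g l" "0 \<le> (\<Sum>m\<in>{1..L}. g m)" using True by (auto intro!: sum_nonneg)
        then show ?case by simp
      qed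
    qed
    also have "\<dots> = enn2real (ennreal (Gamma (b+n) / Gamma b) *
         (\<integral>\<^sup>+t. ennreal (indicator {0<..} t * t^(n-1) * (1+t) powr (-(L*b+n))) \<partial>lborel))"
      unfolding PG_def G_def using dir_nn[OF L b True n] by simp
    finally show ?thesis using True by simp
  qed
  finally show ?thesis .
qed


lemma Gamma_ratio1: "0 < (b::real) \<Longrightarrow> Gamma (b + 1) / Gamma b = b"
proof -
  assume b: "0 < b"
  have "b \<notin> \<int>\<^sub>\<le>\<^sub>0" using b by auto
  then have "Gamma (b + 1) = b * Gamma b" by (rule Gamma_plus1)
  then show ?thesis using Gamma_real_pos[OF b] by simp
qed

lemma Gamma_ratio2: "0 < (b::real) \<Longrightarrow> Gamma (b + 2) / Gamma b = (b+1) * b"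
proof -
  assume b: "0 < b"
  have "b + 1 \<notin> \<int>\<^sub>\<le>\<^sub>0" using b by auto
  then have "Gamma ((b + 1) + 1) = (b+1) * Gamma (b+1)" by (rule Gamma_plus1)
  moreover have "b \<notin> \<int>\<^sub>\<le>\<^sub>0" using b by auto
  then have "Gamma (b + 1) = b * Gamma b" by (rule Gamma_plus1)
  ultimately have "Gamma (b + 2) = (b+1) * b * Gamma b" by (simp add: add.assoc)
  then show ?thesis using Gamma_real_pos[OF b] by simp
qed

lemma dir_e:
  fixes L l :: nat and b :: real
  assumes L: "1 \<le> L" and b: "0 < b"
  shows "(\<integral>y. y l \<partial>dirichlet_measure L b) = (if l \<in> {1..L} then 1 / real L else 0)"
proof -
  have Lb: "0 < real L * b" using L b by simp
  have "(\<integral>y. (y l)^1 \<partial>dirichlet_measure L b) =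
     (if l \<in> {1..L} then enn2real (ennreal (Gamma (b+1) / Gamma b) *
         (\<integral>\<^sup>+t. ennreal (indicator {0<..} t * t^(1-1) * (1+t) powr (-(L*b+1))) \<partial>lborel)) else 0)"
    using dir_moment_gen[OF L b, of 1 l] by simp
  also have "(\<integral>\<^sup>+t. ennreal (indicator {0<..} t * t^(1-1) * (1+t) powr (-(L*b+1))) \<partial>lborel) = ennreal (1/(L*b))"
    using tint[of "L*b+1"] Lb by simp
  also have "enn2real (ennreal (Gamma (b+1) / Gamma b) * ennreal (1/(L*b))) = b * (1/(L*b))"
    using Gamma_ratio1[OF b] b Lb by (simp add: ennreal_mult[symmetric])
  also have "b * (1/(L*b)) = 1 / real L" using b by simp
  finally show ?thesis by simp
qed

lemma dir_s:
  fixes L l :: nat and b :: real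
  assumes L: "1 \<le> L" and b: "0 < b"
  shows "(\<integral>y. (y l)^2 \<partial>dirichlet_measure L b) = (if l \<in> {1..L} then (1 + b) / (real L * (1 + real L * b)) else 0)"
proof -
  have Lb: "0 < real L * b" using L b by simp
  have "(\<integral>y. (y l)^2 \<partial>dirichlet_measure L b) =
     (if l \<in> {1..L} then enn2real (ennreal (Gamma (b+2) / Gamma b) *
         (\<integral>\<^sup>+t. ennreal (indicator {0<..} t * t^(2-1) * (1+t) powr (-(L*b+2))) \<partial>lborel)) else 0)"
    using dir_moment_gen[OF L b, of 2 l] by simp
  also have "(\<integral>\<^sup>+t. ennreal (indicator {0<..} t * t^(2-1) * (1+t) powr (-(L*b+2))) \<partial>lborel) = ennreal (1/(L*b) - 1/(L*b+1))"
    using tint2[of "L*b"] Lb by simp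
  also have "enn2real (ennreal (Gamma (b+2) / Gamma b) * ennreal (1/(L*b) - 1/(L*b+1))) = (b+1) * b * (1/(L*b) - 1/(L*b+1))"
  proof -
    have "0 \<le> 1/(L*b) - 1/(L*b+1)" using Lb by (simp add: field_simps)
    then show ?thesis using Gamma_ratio2[OF b] b by (simp add: ennreal_mult[symmetric])
  qed
  also have "(b+1) * b * (1/(L*b) - 1/(L*b+1)) = (1 + b) / (real L * (1 + real L * b))"
  proof -
    have e1: "1/(L*b) - 1/(L*b+1) = 1/(L*b*(L*b+1))"
    proof -
      have "1/(L*b) - 1/(L*b+1) = (1 * (L*b+1) - 1 * (L*b)) / ((L*b) * (L*b+1))"
        using Lb L by (intro diff_frac_eq) auto
      then show ?thesis by simp
    qed
    have "real L > 0" using L by simp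
    have X: "real L * b * (real L * b + 1) = b * (real L * (1 + real L * b))" by (simp add: algebra_simps)
    have "(b+1) * b * (1/(L*b*(L*b+1))) = (b * (1+b)) / (b * (real L * (1 + real L * b)))"
      unfolding X by (simp add: algebra_simps)
    also have "\<dots> = (1 + b) / (real L * (1 + real L * b))"
      by (rule mult_divide_mult_cancel_left) (use b in simp)
    finally have "(b+1) * b * (1/(L*b*(L*b+1))) = (1 + b) / (real L * (1 + real L * b))" .
    then show ?thesis using e1 by simp
  qed
  finally show ?thesis by simp
qed

lemma bd_meas[measurable]: "beta_density a b \<in> borel_measurable borel"
  unfolding beta_density_def by measurable

lemma Beta_1: "0 < (v::real) \<Longrightarrow> Beta 1 v = 1 / v"
proof -
  assume v: "0 < v"
  have "v \<notin> \<int>\<^sub>\<le>\<^sub>0" using v by auto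
  then have "Gamma (v + 1) = v * Gamma v" by (rule Gamma_plus1)
  then show ?thesis using Gamma_real_pos[OF v] by (simp add: Beta_def add.commute)
qed

lemma field_l1: "0 < (v::real) \<Longrightarrow> v * (1/v - 1/(v+1)) = 1/(v+1)"
proof -
  assume v: "0 < v"
  have "1/v - 1/(v+1) = (1 * (v+1) - 1 * v)/(v * (v+1))" using v by (intro diff_frac_eq) auto
  then show ?thesis using v by simp
qed
lemma field_l2: "0 < (v::real) \<Longrightarrow> v * ((1/v - 2 * (1/(v+1))) + 1/(v+2)) = 2 / ((v + 1) * (v + 2))"
proof -
  assume v: "0 < v"
  have a: "1/v - 1/(v+1) = 1/(v * (v+1))"
  proof - 
    have "1/v - 1/(v+1) = (1 * (v+1) - 1 * v)/(v * (v+1))" using v by (intro diff_frac_eq) auto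
    then show ?thesis by simp
  qed
  have b: "1/(v+1) - 1/(v+2) = 1/((v+1) * (v+2))"
  proof - 
    have "1/(v+1) - 1/(v+2) = (1 * (v+2) - 1 * (v+1))/((v+1) * (v+2))" using v by (intro diff_frac_eq) auto
    then show ?thesis by simp
  qed
  have c: "1/(v * (v+1)) - 1/((v+1) * (v+2)) = 2/(v * ((v+1) * (v+2)))"
  proof -
    have "1/(v * (v+1)) - 1/((v+1) * (v+2)) = (1 * ((v+1) * (v+2)) - 1 * (v * (v+1)))/((v * (v+1)) * ((v+1) * (v+2)))"
      using v by (intro diff_frac_eq) auto
    also have "\<dots> = ((v+1) * 2) / ((v+1) * (v * ((v+1) * (v+2))))" by (simp add: algebra_simps)
    also have "\<dots> = 2/(v * ((v+1) * (v+2)))" using v by (intro mult_divide_mult_cancel_left) auto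
    finally show ?thesis .
  qed
  have "(1/v - 2 * (1/(v+1))) + 1/(v+2) = (1/v - 1/(v+1)) - (1/(v+1) - 1/(v+2))" by simp
  also have "\<dots> = 2/(v * ((v+1) * (v+2)))" using a b c by simp
  finally have "v * ((1/v - 2 * (1/(v+1))) + 1/(v+2)) = v * (2/(v * ((v+1) * (v+2))))" by simp
  also have "\<dots> = 2 / ((v + 1) * (v + 2))" using v by simp
  finally show ?thesis .
qed

lemma beta_mom_gen:
  fixes v V :: real and k j :: nat
  assumes v: "0 < v" and I: "((\<lambda>u. (1-u)^k * u powr (v + j - 1)) has_integral V) {0..1}"
  shows "(\<integral>\<^sup>+x. ennreal (x^k * (1-x)^j) \<partial>density lborel (\<lambda>x. ennreal (beta_density 1 v x))) = ennreal (v * V)"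
proof -
  define f where "f = (\<lambda>x::real. ennreal (indicator {0<..<1} x * (v * (1-x) powr (v-1) * x^k * (1-x)^j)))"
  have fm: "f \<in> borel_measurable borel" unfolding f_def by measurable
  have "(\<integral>\<^sup>+x. ennreal (x^k * (1-x)^j) \<partial>density lborel (\<lambda>x. ennreal (beta_density 1 v x)))
      = (\<integral>\<^sup>+x. ennreal (beta_density 1 v x) * ennreal (x^k * (1-x)^j) \<partial>lborel)"
    by (rule nn_integral_density) measurable
  also have "\<dots> = integral\<^sup>N lborel f"
  proof (rule nn_integral_cong)
    fix x :: real
    show "ennreal (beta_density 1 v x) * ennreal (x^k * (1-x)^j) = f x"
    proof (cases "0 < x \<and> x < 1")
      case True
      then have "beta_density 1 v x = v * (1-x) powr (v-1)"
        using v by (simp add: beta_density_def Beta_1)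
      then show ?thesis using True v by (simp add: f_def ennreal_mult[symmetric] mult_ac)
    qed (auto simp: f_def beta_density_def)
  qed
  also have "\<dots> = (\<integral>\<^sup>+u. f (1 + (-1) * u) \<partial>lborel)"
    using nn_integral_real_affine[OF fm, of "-1" 1] by simp
  also have "\<dots> = (\<integral>\<^sup>+u. ennreal (v * ((1-u)^k * u powr (v + j - 1))) * indicator {0..1} u \<partial>lborel)"
  proof (rule nn_integral_cong_AE)
    have "AE u in lborel. u \<noteq> 0 \<and> u \<noteq> 1"
      using AE_lborel_singleton[of 0] AE_lborel_singleton[of 1] by eventually_elim auto
    then show "AE u in lborel. f (1 + (-1) * u) = ennreal (v * ((1-u)^k * u powr (v + j - 1))) * indicator {0..1} u"
    proof eventually_elim
      case (elim u)
      show ?case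
      proof (cases "0 < u \<and> u < 1")
        case True
        have "u powr (v + j - 1) = u powr (v - 1) * u^j"
          using True by (simp add: powr_add[symmetric] powr_realpow[symmetric] algebra_simps)
        then show ?thesis using True v by (simp add: f_def mult_ac)
      next
        case False
        then have "u < 0 \<or> 1 < u" using elim by auto
        then show ?thesis by (auto simp: f_def indicator_def)
      qed
    qed
  qed
  also have "\<dots> = ennreal (v * V)"
  proof (rule nn_integral_has_integral_lebesgue')
    show "((\<lambda>u. v * ((1-u)^k * u powr (v + j - 1))) has_integral (v * V)) {0..1}"
      by (rule has_integral_mult_right[OF I])
    show "0 \<le> v * ((1-x)^k * x powr (v + j - 1))" if "x \<in> {0..1}" for x
      using that v by auto
  qed
  finally show ?thesis .
qed

lemma powr_int01: "0 < (c::real) \<Longrightarrow> ((\<lambda>u. u powr (c - 1)) has_integral (1/c)) {0..1}"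
  using has_integral_powr_from_0[of "c-1" 1] by simp

lemma beta_mom_00: "0 < v \<Longrightarrow> (\<integral>\<^sup>+x. ennreal (x^0 * (1-x)^0) \<partial>density lborel (\<lambda>x. ennreal (beta_density 1 v x))) = 1"
  using beta_mom_gen[of v 0 0 "1/v"] powr_int01[of v] by simp

lemma beta_mom_0j: "0 < v \<Longrightarrow> (\<integral>\<^sup>+x. ennreal (x^0 * (1-x)^j) \<partial>density lborel (\<lambda>x. ennreal (beta_density 1 v x))) = ennreal (v / (v + j))"
  using beta_mom_gen[of v 0 j "1/(v+j)"] powr_int01[of "v+j"] by simp

lemma beta_mom_10: "0 < v \<Longrightarrow> (\<integral>\<^sup>+x. ennreal (x^1 * (1-x)^0) \<partial>density lborel (\<lambda>x. ennreal (beta_density 1 v x))) = ennreal (1 / (v + 1))"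
proof -
  assume v: "0 < v"
  have "((\<lambda>u. u powr (v - 1) - u powr ((v+1) - 1)) has_integral (1/v - 1/(v+1))) {0..1}"
    by (intro has_integral_diff powr_int01) (use v in auto)
  then have "((\<lambda>u. (1-u)^1 * u powr (v + real (0::nat) - 1)) has_integral (1/v - 1/(v+1))) {0..1}"
  proof (rule has_integral_eq[rotated])
    fix u :: real assume u: "u \<in> {0..1}"
    show "u powr (v - 1) - u powr ((v+1) - 1) = (1-u)^1 * u powr (v + real (0::nat) - 1)"
    proof (cases "u = 0")
      case False
      then have "u powr v = u * u powr (v - 1)" using u by (simp add: powr_mult_base)
      then show ?thesis by (simp add: algebra_simps)
    qed simp
  qed
  from beta_mom_gen[OF v this] have "(\<integral>\<^sup>+x. ennreal (x^1 * (1-x)^0) \<partial>density lborel (\<lambda>x. ennreal (beta_density 1 v x))) = ennreal (v * (1/v - 1/(v+1)))" .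
  moreover have "v * (1/v - 1/(v+1)) = 1/(v+1)" using v by (rule field_l1)
  ultimately show ?thesis by simp
qed

lemma beta_mom_20: "0 < v \<Longrightarrow> (\<integral>\<^sup>+x. ennreal (x^2 * (1-x)^0) \<partial>density lborel (\<lambda>x. ennreal (beta_density 1 v x))) = ennreal (2 / ((v + 1) * (v + 2)))"
proof -
  assume v: "0 < v"
  have "((\<lambda>u. (u powr (v - 1) - 2 * u powr ((v+1) - 1)) + u powr ((v+2) - 1)) has_integral ((1/v - 2 * (1/(v+1))) + 1/(v+2))) {0..1}"
    by (intro has_integral_diff has_integral_add has_integral_mult_right powr_int01) (use v in auto)
  then have "((\<lambda>u. (1-u)^2 * u powr (v + real (0::nat) - 1)) has_integral ((1/v - 2 * (1/(v+1))) + 1/(v+2))) {0..1}"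
  proof (rule has_integral_eq[rotated])
    fix u :: real assume u: "u \<in> {0..1}"
    show "(u powr (v - 1) - 2 * u powr ((v+1) - 1)) + u powr ((v+2) - 1) = (1-u)^2 * u powr (v + real (0::nat) - 1)"
    proof (cases "u = 0")
      case False
      then have "u powr v = u * u powr (v - 1)" using u by (simp add: powr_mult_base)
      moreover have "u powr (v + 1) = u * u powr v" using False u by (simp add: powr_add)
      ultimately show ?thesis by (simp add: algebra_simps power2_eq_square)
    qed simp
  qed
  from beta_mom_gen[OF v this] have "(\<integral>\<^sup>+x. ennreal (x^2 * (1-x)^0) \<partial>density lborel (\<lambda>x. ennreal (beta_density 1 v x))) = ennreal (v * ((1/v - 2 * (1/(v+1))) + 1/(v+2)))" .
  moreover have "v * ((1/v - 2 * (1/(v+1))) + 1/(v+2)) = 2 / ((v + 1) * (v + 2))" using v by (rule field_l2)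
  ultimately show ?thesis by simp
qed


lemma probBt: "0 < v \<Longrightarrow> prob_space (density lborel (\<lambda>x. ennreal (beta_density 1 v x)))"
proof (rule prob_spaceI)
  assume v: "0 < v"
  have "emeasure (density lborel (\<lambda>x. ennreal (beta_density 1 v x))) (space (density lborel (\<lambda>x. ennreal (beta_density 1 v x))))
     = (\<integral>\<^sup>+x. ennreal (x^0 * (1-x)^0) \<partial>density lborel (\<lambda>x. ennreal (beta_density 1 v x)))"
    by (simp add: emeasure_density nn_integral_density)
  also have "\<dots> = 1" using beta_mom_00[OF v] .
  finally show "emeasure (density lborel (\<lambda>x. ennreal (beta_density 1 v x))) (space (density lborel (\<lambda>x. ennreal (beta_density 1 v x)))) = 1" .
qed

lemma AE_Bt: "AE x in density lborel (\<lambda>x. ennreal (beta_density 1 v x)). 0 < x \<and> x < 1"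
  by (subst AE_density) (auto simp: beta_density_def intro!: AE_I2 split: if_splits)

lemma gem_moment_gen:
  fixes l n :: nat and v a c :: real
  assumes v: "0 < v" and a: "0 \<le> a" and c: "0 \<le> c" and n: "1 \<le> n"
    and hA: "(\<integral>\<^sup>+x. ennreal (x^n * (1-x)^0) \<partial>density lborel (\<lambda>x. ennreal (beta_density 1 v x))) = ennreal a"
    and hB: "(\<integral>\<^sup>+x. ennreal (x^0 * (1-x)^n) \<partial>density lborel (\<lambda>x. ennreal (beta_density 1 v x))) = ennreal c"
  shows "(\<integral>y. (y l)^n \<partial>gem_measure v) = (if 1 \<le> l then a * c^(l-1) else 0)"
proof -
  define Bt where "Bt = density lborel (\<lambda>x. ennreal (beta_density 1 v x))"
  define P where "P = (\<Pi>\<^sub>M g\<in>(UNIV::nat set). Bt)"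
  have pB: "prob_space Bt" unfolding Bt_def by (rule probBt[OF v])
  have sB[measurable_cong]: "sets Bt = sets borel" by (simp add: Bt_def)
  interpret PP: product_prob_space "\<lambda>_::nat. Bt" "UNIV :: nat set"
    by (rule product_prob_spaceI) (rule pB)
  have sbm: "stick_break \<in> measurable P omega_space"
    unfolding omega_space_def P_def stick_break_def
    by (rule measurable_PiM_single') (measurable, auto simp: space_PiM)
  have gm: "gem_measure v = distr P omega_space stick_break"
    by (simp add: gem_measure_def P_def Bt_def)
  have "(\<integral>y. (y l)^n \<partial>gem_measure v) = (\<integral>w. (stick_break w l)^n \<partial>P)"
    unfolding gm by (rule integral_distr[OF sbm]) (simp add: omega_space_def)
  also have "\<dots> = (if 1 \<le> l then a * c^(l-1) else 0)"
  proof (cases "1 \<le> l")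
    case False
    then show ?thesis using n by (simp add: stick_break_def)
  next
    case True
    define F where "F g x = x^(if g = l then n else 0) * (1-x)^(if g = l then 0 else n)" for g :: nat and x :: real
    have AEP: "AE w in P. \<forall>g. 0 < w g \<and> w g < 1"
      unfolding AE_all_countable P_def
    proof
      fix g :: nat
      have "AE x in Bt. 0 < x \<and> x < 1" unfolding Bt_def by (rule AE_Bt)
      then show "AE w in \<Pi>\<^sub>M g\<in>(UNIV::nat set). Bt. 0 < w g \<and> w g < 1"
        using PP.AE_component[of g "\<lambda>x. 0 < x \<and> x < 1"] by simp
    qed
    have Fnn: "0 \<le> F g (w g)" if "\<forall>g. 0 < w g \<and> w g < 1" for w g
    proof -
      have "0 \<le> w g" "0 \<le> 1 - w g" using that[rule_format, of g] by auto
      then show ?thesis by (simp add: F_def)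
    qed
    have pw: "(stick_break w l)^n = (\<Prod>g\<in>{1..l}. F g (w g))" for w
    proof -
      have "{1..l} = insert l {1..<l}" using True by auto
      then have "(\<Prod>g\<in>{1..l}. F g (w g)) = F l (w l) * (\<Prod>g\<in>{1..<l}. F g (w g))" by simp
      also have "(\<Prod>g\<in>{1..<l}. F g (w g)) = (\<Prod>g\<in>{1..<l}. (1 - w g)^n)"
        by (rule prod.cong) (auto simp: F_def)
      also have "\<dots> = (\<Prod>g\<in>{1..<l}. (1 - w g))^n" by (rule prod_power_distrib[symmetric])
      finally show ?thesis using True by (simp add: stick_break_def F_def power_mult_distrib)
    qed
    have "(\<integral>w. (stick_break w l)^n \<partial>P) = enn2real (\<integral>\<^sup>+w. ennreal ((stick_break w l)^n) \<partial>P)"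
    proof (rule integral_eq_nn_integral)
      show "(\<lambda>w. (stick_break w l)^n) \<in> borel_measurable P"
        by (rule measurable_compose[OF sbm, where g="\<lambda>y. (y l)^n"]) (simp add: omega_space_def)
      show "AE w in P. 0 \<le> (stick_break w l)^n"
        using AEP by eventually_elim (simp add: pw prod_nonneg Fnn)
    qed
    also have "(\<integral>\<^sup>+w. ennreal ((stick_break w l)^n) \<partial>P) = (\<integral>\<^sup>+w. (\<Prod>g\<in>{1..l}. ennreal (F g (w g))) \<partial>P)"
    proof (rule nn_integral_cong_AE)
      show "AE w in P. ennreal ((stick_break w l)^n) = (\<Prod>g\<in>{1..l}. ennreal (F g (w g)))"
        using AEP by eventually_elim (simp add: pw prod_ennreal Fnn)
    qed
    also have "\<dots> = (\<integral>\<^sup>+w. (\<Prod>g\<in>{1..l}. ennreal (F g (w g))) \<partial>distr P (\<Pi>\<^sub>M g\<in>{1..l}. Bt) (\<lambda>w. restrict w {1..l}))"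
    proof -
      have "(\<integral>\<^sup>+w. (\<Prod>g\<in>{1..l}. ennreal (F g (w g))) \<partial>distr P (\<Pi>\<^sub>M g\<in>{1..l}. Bt) (\<lambda>w. restrict w {1..l}))
          = (\<integral>\<^sup>+w. (\<Prod>g\<in>{1..l}. ennreal (F g (restrict w {1..l} g))) \<partial>P)"
        by (rule nn_integral_distr) (auto simp: P_def F_def)
      also have "\<dots> = (\<integral>\<^sup>+w. (\<Prod>g\<in>{1..l}. ennreal (F g (w g))) \<partial>P)"
        by (rule nn_integral_cong) (rule prod.cong, auto)
      finally show ?thesis by simp
    qed
    also have "distr P (\<Pi>\<^sub>M g\<in>{1..l}. Bt) (\<lambda>w. restrict w {1..l}) = (\<Pi>\<^sub>M g\<in>{1..l}. Bt)"
      unfolding P_def by (rule PP.distr_PiM_restrict_finite) auto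
    also have "(\<integral>\<^sup>+w. (\<Prod>g\<in>{1..l}. ennreal (F g (w g))) \<partial>(\<Pi>\<^sub>M g\<in>{1..l}. Bt))
        = (\<Prod>g\<in>{1..l}. (\<integral>\<^sup>+x. ennreal (F g x) \<partial>Bt))"
      by (rule PP.product_nn_integral_prod) (auto simp: F_def)
    also have "\<dots> = (\<Prod>g\<in>{1..l}. if g = l then ennreal a else ennreal c)"
      by (rule prod.cong) (auto simp: F_def hA[folded Bt_def, simplified] hB[folded Bt_def, simplified])
    also have "\<dots> = ennreal a * ennreal c ^ (l-1)"
    proof -
      have "{1..l} = insert l {1..<l}" using True by auto
      then have "(\<Prod>g\<in>{1..l}. if g = l then ennreal a else ennreal c)
          = ennreal a * (\<Prod>g\<in>{1..<l}. if g = l then ennreal a else ennreal c)" by simp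
      also have "(\<Prod>g\<in>{1..<l}. if g = l then ennreal a else ennreal c) = (\<Prod>g\<in>{1..<l}. ennreal c)"
        by (rule prod.cong) auto
      finally show ?thesis by simp
    qed
    also have "enn2real (ennreal a * ennreal c ^ (l-1)) = a * c^(l-1)"
      using a c by (simp add: ennreal_power ennreal_mult[symmetric])
    finally show ?thesis using True by simp
  qed
  finally show ?thesis .
qed

lemma f1: "0 < (v::real) \<Longrightarrow> (1/(v+1))^2 / (1 - (v/(v+1))^2) = 1/(2 * v+1)"
proof -
  assume v: "0 < v"
  have w: "v + 1 \<noteq> 0" using v by simp
  have "1 - (v/(v+1))^2 = ((v+1)^2 - v^2)/(v+1)^2" using w by (simp add: power_divide diff_divide_distrib)
  also have "(v+1)^2 - v^2 = 2 * v+1" by (simp add: power2_eq_square algebra_simps)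
  finally have "1 - (v/(v+1))^2 = (2 * v+1)/(v+1)^2" .
  then show ?thesis using w v by (simp add: power_divide)
qed
lemma f2: "0 < (v::real) \<Longrightarrow> 2/((v+1) * (v+2)) / (1 - v/(v+2)) = 1/(1+v)"
proof -
  assume v: "0 < v"
  have w: "v + 2 \<noteq> 0" "v + 1 \<noteq> 0" using v by auto
  have "1 - v/(v+2) = 2/(v+2)" using w by (simp add: field_simps)
  then have "2/((v+1) * (v+2)) / (1 - v/(v+2)) = 2/((v+1) * (v+2)) / (2/(v+2))" by simp
  also have "\<dots> = (2 * (v+2)) / (((v+1) * (v+2)) * 2)" by (rule divide_divide_times_eq)
  also have "\<dots> = 1/(1+v)"
  proof -
    have nz: "((v+1) * (v+2)) * 2 \<noteq> 0" "1 + v \<noteq> 0" using w by auto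
    show ?thesis by (simp only: frac_eq_eq[OF nz]) (simp add: algebra_simps)
  qed
  finally show ?thesis .
qed
lemma f3: "1 \<le> (L::nat) \<Longrightarrow> real L  *  (1 / real L)^2 = 1 / real L"
  by (simp add: power2_eq_square)
lemma f4: "1 \<le> (L::nat) \<Longrightarrow> real L  *  ((1 + b) / (real L  *  (1 + real L  *  b))) = (1 + b) / (1 + real L  *  b)"
  by simp
lemma f5: "0 < (\<alpha>::real) \<Longrightarrow> exp \<beta> / (\<alpha> + exp \<beta>)  *  q + (1 - exp \<beta> / (\<alpha> + exp \<beta>))  *  p = 1 / (\<alpha> + exp \<beta>)  *  (exp \<beta>  *  q + \<alpha>  *  p)"
proof -
  assume a: "0 < \<alpha>"
  have D: "\<alpha> + exp \<beta> \<noteq> 0" using a by (metis add_pos_pos exp_gt_zero less_irrefl)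
  have "\<alpha> / (\<alpha> + exp \<beta>) + exp \<beta> / (\<alpha> + exp \<beta>) = 1" using D by (simp add: add_divide_distrib[symmetric])
  then have h: "1 - exp \<beta> / (\<alpha> + exp \<beta>) = \<alpha> / (\<alpha> + exp \<beta>)" by linarith
  show ?thesis unfolding h by (simp add: divide_inverse algebra_simps)
qed

lemma geo_shift:
  fixes a r :: real
  assumes r: "\<bar>r\<bar> < 1"
  shows "(\<lambda>l::nat. if 1 \<le> l then a * r^(l-1) else 0) sums (a / (1 - r))"
proof -
  have "(\<lambda>m. a * r^m) sums (a * (1 / (1 - r)))"
  proof (rule sums_mult)
    show "(\<lambda>m. r^m) sums (1 / (1 - r))" by (rule geometric_sums) (use r in simp)
  qed
  then have "(\<lambda>m. (\<lambda>l::nat. if 1 \<le> l then a * r^(l-1) else 0) (Suc m)) sums (a / (1 - r))" by simp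
  then show ?thesis by (subst (asm) sums_Suc_iff) simp
qed

lemma sq_shift:
  fixes a r :: real
  shows "(if 1 \<le> l then a * r^(l-1) else 0)^2 = (if 1 \<le> l then a^2 * (r^2)^(l-1) else 0)"
proof -
  have "(r^(l-1))^2 = (r^2)^(l-1)" by (simp add: power_mult[symmetric] mult.commute)
  then show ?thesis by (simp add: power_mult_distrib)
qed

theorem proposition1:
  fixes M :: "'a measure"
    and C :: "nat \<Rightarrow> 'a \<Rightarrow> nat"
    and omega :: "nat \<Rightarrow> 'a \<Rightarrow> nat \<Rightarrow> real"
    and R :: "nat \<Rightarrow> nat \<Rightarrow> 'a \<Rightarrow> nat"
    and theta :: "nat \<Rightarrow> 'a \<Rightarrow> 'b::polish_space"
    and H :: "'b measure"
    and L :: nat and b0 \<alpha> \<beta> \<nu> :: real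
    and j j' i i' :: nat
  assumes M: "prob_space M"
    and L: "1 \<le> L" and b0: "0 < b0" and alpha: "0 < \<alpha>" and beta: "0 \<le> \<beta>" and nu: "0 < \<nu>"
    and jj': "j \<noteq> j'"
    and C_meas: "\<And>c. C c \<in> measurable M (count_space UNIV)"
    and omega_meas: "\<And>k. omega k \<in> measurable M omega_space"
    and R_meas: "\<And>r k. R r k \<in> measurable M (count_space UNIV)"
    and theta_meas: "\<And>l. theta l \<in> borel_measurable M"
    and tie: "measure M {x \<in> space M. C j x = C j' x} = exp \<beta> / (\<alpha> + exp \<beta>)"
    and R_given_omega:
      "\<And>k I ls A. finite I \<Longrightarrow> A \<in> sets omega_space \<Longrightarrow>
         measure M {x \<in> space M. omega k x \<in> A \<and> (\<forall>r\<in>I. R r k x = ls r)}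
         = integral\<^sup>L M (\<lambda>x. indicator A (omega k x) * (\<Prod>r\<in>I. omega k x (ls r)))"
    and theta_law: "\<And>l. distr M borel (theta l) = H"
    and H_diffuse: "\<And>y. emeasure H {y} = 0"
    and indep: "prob_space.indep_sets M (model_blocks M C j j' omega R theta) UNIV"
  shows "((\<forall>k. distr M omega_space (omega k) = dirichlet_measure L b0) \<longrightarrow>
           measure M {x \<in> space M. theta (R i (C j x) x) x = theta (R i' (C j' x) x) x}
           = 1 / (\<alpha> + exp \<beta>) *
             (exp \<beta> * ((1 + b0) / (1 + real L * b0)) ^ (1 - (if i = i' then 1 else 0))
              + \<alpha> / real L))
       \<and> ((\<forall>k. distr M omega_space (omega k) = gem_measure \<nu>) \<longrightarrow>
           measure M {x \<in> space M. theta (R i (C j x) x) x = theta (R i' (C j' x) x) x}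
           = 1 / (\<alpha> + exp \<beta>) *
             (exp \<beta> * (1 / (1 + \<nu>)) ^ (1 - (if i = i' then 1 else 0))
              + \<alpha> / (2 * \<nu> + 1)))"
proof -
  have P1: "\<exists>q p. (if i = i' then q = 1 else (\<lambda>l. \<integral>y. (y l)^2 \<partial>\<mu>) sums q)
           \<and> (\<lambda>l. (\<integral>y. y l \<partial>\<mu>)^2) sums p
           \<and> measure M {x \<in> space M. theta (R i (C j x) x) x = theta (R i' (C j' x) x) x}
             = measure M {x \<in> space M. C j x = C j' x} * q
               + (1 - measure M {x \<in> space M. C j x = C j' x}) * p"
    if law: "\<forall>k. distr M omega_space (omega k) = \<mu>" for \<mu>
    by (rule part1[OF M jj' C_meas omega_meas R_meas theta_meas R_given_omega theta_law H_diffuse indep])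
       (use law in auto)
  have Ir: "\<And>x::real. x ^ (1 - (if i = i' then 1 else 0)) = (if i = i' then 1 else x)" by simp
  show ?thesis
  proof (intro conjI impI)
    assume law: "\<forall>k. distr M omega_space (omega k) = dirichlet_measure L b0"
    obtain q p where qp: "if i = i' then q = 1 else (\<lambda>l. \<integral>y. (y l)^2 \<partial>dirichlet_measure L b0) sums q"
      and ps: "(\<lambda>l. (\<integral>y. y l \<partial>dirichlet_measure L b0)^2) sums p"
      and meq: "measure M {x \<in> space M. theta (R i (C j x) x) x = theta (R i' (C j' x) x) x}
             = measure M {x \<in> space M. C j x = C j' x} * q
               + (1 - measure M {x \<in> space M. C j x = C j' x}) * p"
      using P1[OF law] by blast
    have "(\<lambda>l. (\<integral>y. y l \<partial>dirichlet_measure L b0)^2) sums (\<Sum>l\<in>{1..L}. (\<integral>y. y l \<partial>dirichlet_measure L b0)^2)"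
      by (rule sums_finite) (auto simp: dir_e[OF L b0])
    moreover have "(\<Sum>l\<in>{1..L}. (\<integral>y. y l \<partial>dirichlet_measure L b0)^2) = 1 / real L"
      using f3[OF L] by (simp add: dir_e[OF L b0])
    ultimately have p: "p = 1 / real L" using ps by (metis sums_unique2)
    have q: "q = (if i = i' then 1 else (1 + b0) / (1 + real L * b0))"
    proof (cases "i = i'")
      case False
      have "(\<lambda>l. \<integral>y. (y l)^2 \<partial>dirichlet_measure L b0) sums (\<Sum>l\<in>{1..L}. \<integral>y. (y l)^2 \<partial>dirichlet_measure L b0)"
        by (rule sums_finite) (auto simp: dir_s[OF L b0])
      moreover have "(\<Sum>l\<in>{1..L}. \<integral>y. (y l)^2 \<partial>dirichlet_measure L b0) = (1 + b0) / (1 + real L * b0)"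
        using f4[OF L, of b0] by (simp add: dir_s[OF L b0])
      ultimately show ?thesis using qp False by (metis sums_unique2)
    qed (use qp in simp)
    show "measure M {x \<in> space M. theta (R i (C j x) x) x = theta (R i' (C j' x) x) x}
           = 1 / (\<alpha> + exp \<beta>) *
             (exp \<beta> * ((1 + b0) / (1 + real L * b0)) ^ (1 - (if i = i' then 1 else 0))
              + \<alpha> / real L)"
      unfolding meq tie f5[OF alpha] p q Ir by (simp split: if_split)
  next
    assume law: "\<forall>k. distr M omega_space (omega k) = gem_measure \<nu>"
    obtain q p where qp: "if i = i' then q = 1 else (\<lambda>l. \<integral>y. (y l)^2 \<partial>gem_measure \<nu>) sums q"
      and ps: "(\<lambda>l. (\<integral>y. y l \<partial>gem_measure \<nu>)^2) sums p"
      and meq: "measure M {x \<in> space M. theta (R i (C j x) x) x = theta (R i' (C j' x) x) x}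
             = measure M {x \<in> space M. C j x = C j' x} * q
               + (1 - measure M {x \<in> space M. C j x = C j' x}) * p"
      using P1[OF law] by blast
    have e: "(\<integral>y. y l \<partial>gem_measure \<nu>) = (if 1 \<le> l then 1/(\<nu>+1) * (\<nu>/(\<nu>+1))^(l-1) else 0)" for l
      using gem_moment_gen[OF nu, of "1/(\<nu>+1)" "\<nu>/(\<nu>+1)" 1 l] beta_mom_10[OF nu] beta_mom_0j[OF nu, of 1] nu
      by simp
    have s: "(\<integral>y. (y l)^2 \<partial>gem_measure \<nu>) = (if 1 \<le> l then 2/((\<nu>+1)*(\<nu>+2)) * (\<nu>/(\<nu>+2))^(l-1) else 0)" for l
      using gem_moment_gen[OF nu, of "2/((\<nu>+1)*(\<nu>+2))" "\<nu>/(\<nu>+2)" 2 l] beta_mom_20[OF nu] beta_mom_0j[OF nu, of 2] nu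
      by simp
    have "\<nu>^2 < (\<nu>+1)^2" by (rule power_strict_mono) (use nu in auto)
    then have r1: "\<bar>(\<nu>/(\<nu>+1))^2\<bar> < 1" using nu by (simp add: power_divide)
    have "(\<lambda>l::nat. if 1 \<le> l then (1/(\<nu>+1))^2 * ((\<nu>/(\<nu>+1))^2)^(l-1) else 0) sums ((1/(\<nu>+1))^2 / (1 - (\<nu>/(\<nu>+1))^2))"
      by (rule geo_shift[OF r1])
    then have "(\<lambda>l. (\<integral>y. y l \<partial>gem_measure \<nu>)^2) sums (1/(2*\<nu>+1))"
      unfolding e sq_shift f1[OF nu] .
    then have p: "p = 1/(2*\<nu>+1)" using ps by (metis sums_unique2)
    have q: "q = (if i = i' then 1 else 1/(1+\<nu>))"
    proof (cases "i = i'")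
      case False
      have r2: "\<bar>\<nu>/(\<nu>+2)\<bar> < 1" using nu by simp
      have "(\<lambda>l::nat. if 1 \<le> l then 2/((\<nu>+1)*(\<nu>+2)) * (\<nu>/(\<nu>+2))^(l-1) else 0) sums (2/((\<nu>+1)*(\<nu>+2)) / (1 - \<nu>/(\<nu>+2)))"
        by (rule geo_shift[OF r2])
      then have "(\<lambda>l. \<integral>y. (y l)^2 \<partial>gem_measure \<nu>) sums (1/(1+\<nu>))"
        unfolding s f2[OF nu] .
      then show ?thesis using qp False by (metis sums_unique2)
    qed (use qp in simp)
    show "measure M {x \<in> space M. theta (R i (C j x) x) x = theta (R i' (C j' x) x) x}
           = 1 / (\<alpha> + exp \<beta>) *
             (exp \<beta> * (1 / (1 + \<nu>)) ^ (1 - (if i = i' then 1 else 0))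
              + \<alpha> / (2 * \<nu> + 1))"
      unfolding meq tie f5[OF alpha] p q Ir by (simp split: if_split)
  qed
qed

end
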